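(* Let $\mathcal{C}$ be an uncrossable family of cycles in a graph and $C_1,C_2\in\mathcal{C}$. Let $v,w$ be two vertices, $P_1$ a $v$-$w$-path in $C_1$ and $P_2$ a $v$-$w$-path in $C_2$. Then $P_1+P_2$ or $P_1+(C_2-P_2)$ contains (the edge set of) a cycle in $\mathcal{C}$.
   Context: Graphs may be directed or undirected; cycles are simple, and a $v$-$w$-path in a cycle means a subpath of the cycle with endpoints $v$ and $w$. $P+Q$ is the union (multiset sum) of edge sets and $C-P$ the edge set of $C$ minus that of $P$. A family $\mathcal{C}$ is uncrossable if for all $C_1,C_2\in\mathcal{C}$ and every path $P_2$ in $C_2$ sharing only its endpoints with $C_1$, there is a path $P_1$ in $C_1$ between these endpoints with $P_1+P_2\in\mathcal{C}$ and $(C_1-P_1)+(C_2-P_2)$ containing a cycle of $\mathcal{C}$. *)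

theory Defs
  imports Main "HOL-Library.Multiset"
begin

text \<open>A graph (possibly with parallel edges) is given by an edge type 'e, an edge set E,
  an endpoint map ends (tail, head), and a flag dir (True = directed, False = undirected).
  Cycles and paths are identified with their edge sets; sums of edge sets are multisets.\<close>

definition step :: "bool \<Rightarrow> ('e \<Rightarrow> 'v \<times> 'v) \<Rightarrow> 'v \<Rightarrow> 'e \<Rightarrow> 'v \<Rightarrow> bool" where
  "step dir ends u e w \<longleftrightarrow> ends e = (u, w) \<or> (\<not> dir \<and> ends e = (w, u))"

definition is_walk :: "bool \<Rightarrow> ('e \<Rightarrow> 'v \<times> 'v) \<Rightarrow> 'e set \<Rightarrow> 'v list \<Rightarrow> 'e list \<Rightarrow> bool" where
  "is_walk dir ends E vs es \<longleftrightarrow> length vs = Suc (length es) \<and> set es \<subseteq> E \<and>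
     (\<forall>i < length es. step dir ends (vs ! i) (es ! i) (vs ! Suc i))"

definition is_path :: "bool \<Rightarrow> ('e \<Rightarrow> 'v \<times> 'v) \<Rightarrow> 'e set \<Rightarrow> 'v \<Rightarrow> 'v \<Rightarrow> 'v list \<Rightarrow> 'e list \<Rightarrow> bool" where
  "is_path dir ends E v w vs es \<longleftrightarrow> is_walk dir ends E vs es \<and> distinct vs \<and> hd vs = v \<and> last vs = w"

definition is_cycle :: "bool \<Rightarrow> ('e \<Rightarrow> 'v \<times> 'v) \<Rightarrow> 'e set \<Rightarrow> 'v list \<Rightarrow> 'e list \<Rightarrow> bool" where
  "is_cycle dir ends E vs es \<longleftrightarrow> is_walk dir ends E vs es \<and> es \<noteq> [] \<and> hd vs = last vs \<and>
     distinct (tl vs) \<and> distinct es"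

definition cycle_edges :: "bool \<Rightarrow> ('e \<Rightarrow> 'v \<times> 'v) \<Rightarrow> 'e set \<Rightarrow> 'e set \<Rightarrow> bool" where
  "cycle_edges dir ends E C \<longleftrightarrow> (\<exists>vs es. is_cycle dir ends E vs es \<and> C = set es)"

definition verts :: "('e \<Rightarrow> 'v \<times> 'v) \<Rightarrow> 'e set \<Rightarrow> 'v set" where
  "verts ends F = fst ` ends ` F \<union> snd ` ends ` F"

definition path_in :: "bool \<Rightarrow> ('e \<Rightarrow> 'v \<times> 'v) \<Rightarrow> 'e set \<Rightarrow> 'v \<Rightarrow> 'v \<Rightarrow> 'e set \<Rightarrow> bool" where
  "path_in dir ends C v w P \<longleftrightarrow> (\<exists>vs es. is_path dir ends C v w vs es \<and> P = set es)"

definition uncrossable :: "bool \<Rightarrow> ('e \<Rightarrow> 'v \<times> 'v) \<Rightarrow> 'e set set \<Rightarrow> bool" where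
  "uncrossable dir ends \<C> \<longleftrightarrow>
    (\<forall>C1\<in>\<C>. \<forall>C2\<in>\<C>. \<forall>x y vs es.
       is_path dir ends C2 x y vs es \<and> x \<noteq> y \<and>
       set vs \<inter> verts ends C1 = {x, y} \<and> set es \<inter> C1 = {} \<longrightarrow>
       (\<exists>P1. (path_in dir ends C1 x y P1 \<or> path_in dir ends C1 y x P1) \<and>
             (\<exists>D\<in>\<C>. mset_set D = mset_set P1 + mset_set (set es)) \<and>
             (\<exists>D\<in>\<C>. mset_set D \<subseteq># mset_set (C1 - P1) + mset_set (C2 - set es))))"

end

theory Submission
  imports Defs
begin


definition ustep :: "('e \<Rightarrow> 'v \<times> 'v) \<Rightarrow> 'v \<Rightarrow> 'e \<Rightarrow> 'v \<Rightarrow> bool" where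
  "ustep ends u e w \<longleftrightarrow> ends e = (u, w) \<or> ends e = (w, u)"

definition uwalk :: "('e \<Rightarrow> 'v \<times> 'v) \<Rightarrow> 'v list \<Rightarrow> 'e list \<Rightarrow> bool" where
  "uwalk ends vs es \<longleftrightarrow> length vs = Suc (length es) \<and>
     (\<forall>i < length es. ustep ends (vs ! i) (es ! i) (vs ! Suc i))"

lemma ustep_sym: "ustep ends u e w \<Longrightarrow> ustep ends w e u"
  by (auto simp: ustep_def)

lemma step_ustep: "step dir ends u e w \<Longrightarrow> ustep ends u e w"
  by (auto simp: step_def ustep_def)

lemma ustep_uniq: "ustep ends u e w \<Longrightarrow> ustep ends u' e w' \<Longrightarrow>
   (u = u' \<and> w = w') \<or> (u = w' \<and> w = u')"
  by (auto simp: ustep_def)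

lemma walk_uwalk: "is_walk dir ends E vs es \<Longrightarrow> uwalk ends vs es"
  by (auto simp: is_walk_def uwalk_def step_ustep)

lemma ustep_verts: "ustep ends u e w \<Longrightarrow> e \<in> F \<Longrightarrow> u \<in> verts ends F \<and> w \<in> verts ends F"
  unfolding ustep_def verts_def by (auto intro: rev_image_eqI)

lemma verts_Un: "verts ends (A \<union> B) = verts ends A \<union> verts ends B"
  unfolding verts_def by auto

lemma verts_mono: "A \<subseteq> B \<Longrightarrow> verts ends A \<subseteq> verts ends B"
  unfolding verts_def by auto

lemma verts_iff: "x \<in> verts ends F \<longleftrightarrow> (\<exists>e\<in>F. x = fst (ends e) \<or> x = snd (ends e))"
  unfolding verts_def by force

definition lstruct :: "('e \<Rightarrow> 'v \<times> 'v) \<Rightarrow> (int \<Rightarrow> 'v) \<Rightarrow> (int \<Rightarrow> 'e) \<Rightarrow> int set \<Rightarrow> int set \<Rightarrow> bool" where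
  "lstruct ends V Ed Dm Vd \<longleftrightarrow>
    (\<forall>r\<in>Dm. ustep ends (V r) (Ed r) (V (r+1)) \<and> r \<in> Vd \<and> r + 1 \<in> Vd) \<and>
    (\<forall>r\<in>Dm. \<forall>s\<in>Vd. V s = V r \<longrightarrow> Ed s = Ed r \<and> V (s+1) = V (r+1) \<and> s \<in> Dm) \<and>
    (\<forall>r\<in>Dm. \<forall>s\<in>Vd. V s = V (r+1) \<longrightarrow> V (s-1) = V r \<and> Ed (s-1) = Ed r \<and> s - 1 \<in> Dm)"

lemma lstructD1: "lstruct ends V Ed Dm Vd \<Longrightarrow> r \<in> Dm \<Longrightarrow> ustep ends (V r) (Ed r) (V (r+1)) \<and> r \<in> Vd \<and> r + 1 \<in> Vd"
  unfolding lstruct_def by blast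
lemma lstructD2: "lstruct ends V Ed Dm Vd \<Longrightarrow> r \<in> Dm \<Longrightarrow> s \<in> Vd \<Longrightarrow> V s = V r \<Longrightarrow> Ed s = Ed r \<and> V (s+1) = V (r+1) \<and> s \<in> Dm"
  unfolding lstruct_def by blast
lemma lstructD3: "lstruct ends V Ed Dm Vd \<Longrightarrow> r \<in> Dm \<Longrightarrow> s \<in> Vd \<Longrightarrow> V s = V (r+1) \<Longrightarrow> V (s-1) = V r \<and> Ed (s-1) = Ed r \<and> s - 1 \<in> Dm"
  unfolding lstruct_def by blast

lemma lstruct_rev:
  assumes L: "lstruct ends V Ed Dm Vd"
  shows "lstruct ends (\<lambda>r. V (-r)) (\<lambda>r. Ed (-r-1)) {r. -r-1 \<in> Dm} {r. -r \<in> Vd}"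
  unfolding lstruct_def
proof (intro conjI ballI impI)
  fix r assume r: "r \<in> {r. -r-1 \<in> Dm}"
  then have h: "ustep ends (V (-r-1)) (Ed (-r-1)) (V (-r-1+1)) \<and> -r-1 \<in> Vd \<and> -r-1+1 \<in> Vd"
    using lstructD1[OF L, of "-r-1"] r by simp
  have e1: "-(r+1) = -r-1" "-r-1+1 = -r" by simp_all
  show "ustep ends (V (-r)) (Ed (-r-1)) (V (-(r+1)))" using h ustep_sym unfolding e1 by metis
  show "r \<in> {r. -r \<in> Vd}" using h unfolding e1 by simp
  show "r + 1 \<in> {r. -r \<in> Vd}" using h unfolding e1 by simp
next
  fix r s assume r: "r \<in> {r. -r-1 \<in> Dm}" and s: "s \<in> {r. -r \<in> Vd}" and e: "V (-s) = V (-r)"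
  have e1: "-r-1+1 = -r" "-(s+1) = -s-1" "-(r+1) = -r-1" by simp_all
  have "V (-s-1) = V (-r-1) \<and> Ed (-s-1) = Ed (-r-1) \<and> -s - 1 \<in> Dm"
    using lstructD3[OF L, of "-r-1" "-s"] r s e unfolding e1 by simp
  then show "Ed (-s-1) = Ed (-r-1)" "V (-(s+1)) = V (-(r+1))" "s \<in> {r. -r-1 \<in> Dm}"
    unfolding e1 by simp_all
next
  fix r s assume r: "r \<in> {r. -r-1 \<in> Dm}" and s: "s \<in> {r. -r \<in> Vd}" and e: "V (-s) = V (-(r+1))"
  have e1: "-(r+1) = -r-1" "-r-1+1 = -r" "-(s-1) = -s+1" "-(s-1)-1 = -s" by simp_all
  have "Ed (-s) = Ed (-r-1) \<and> V (-s+1) = V (-r-1+1) \<and> -s \<in> Dm"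
    using lstructD2[OF L, of "-r-1" "-s"] r s e unfolding e1 by simp
  then show "V (-(s-1)) = V (-r)" "Ed (-(s-1)-1) = Ed (-r-1)" "s - 1 \<in> {r. -r-1 \<in> Dm}"
    unfolding e1 by simp_all
qed

lemma mono_fw:
  assumes L: "lstruct ends V Ed Dm Vd" and W: "uwalk ends vs es" and D: "distinct vs"
    and S: "set es \<subseteq> Ed ` Dm" and p: "vs ! 0 = V p" "p \<in> Dm" and e0: "es ! 0 = Ed p"
  shows "m \<le> length es \<Longrightarrow> vs ! m = V (p + int m) \<and> p + int m \<in> Vd \<and>
     (m < length es \<longrightarrow> es ! m = Ed (p + int m) \<and> p + int m \<in> Dm)"
proof (induction m)
  case 0
  then show ?case using p e0 lstructD1[OF L p(2)] by simp
next
  case (Suc m)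
  then have IH: "vs ! m = V (p + int m)" "es ! m = Ed (p + int m)" "p + int m \<in> Dm" by auto
  have lv: "length vs = Suc (length es)" using W by (simp add: uwalk_def)
  have st: "ustep ends (vs ! m) (es ! m) (vs ! Suc m)" using W Suc.prems by (simp add: uwalk_def)
  have st2: "ustep ends (V (p + int m)) (Ed (p + int m)) (V (p + int m + 1))" "p + int m + 1 \<in> Vd"
    using lstructD1[OF L IH(3)] by auto
  have "vs ! Suc m \<noteq> vs ! m" using D Suc.prems lv by (simp add: nth_eq_iff_index_eq)
  then have v1: "vs ! Suc m = V (p + int m + 1)"
    using ustep_uniq[OF st[unfolded IH(1,2)] st2(1)] IH(1) by auto
  have r2: "es ! Suc m = Ed (p + int m + 1) \<and> p + int m + 1 \<in> Dm" if lt: "Suc m < length es"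
  proof -
    obtain r where r: "r \<in> Dm" "es ! Suc m = Ed r" using S lt by (meson image_iff nth_mem subsetD)
    have "ustep ends (vs ! Suc m) (es ! Suc m) (vs ! Suc (Suc m))" using W lt unfolding uwalk_def by blast
    then have st3: "ustep ends (vs ! Suc m) (Ed r) (vs ! Suc (Suc m))" using r by simp
    have st4: "ustep ends (V r) (Ed r) (V (r+1))" using lstructD1[OF L r(1)] by simp
    have "vs ! Suc (Suc m) \<noteq> vs ! m" using D lt lv by (simp add: nth_eq_iff_index_eq)
    then consider "vs ! Suc m = V r" | "vs ! Suc m = V (r+1)" "vs ! Suc (Suc m) = V r"
      using ustep_uniq[OF st3 st4] by auto
    then show ?thesis
    proof cases
      case 1
      then show ?thesis using lstructD2[OF L r(1) st2(2)] v1 r(2) by simp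
    next
      case 2
      then have "V (p + int m + 1 - 1) = V r" using lstructD3[OF L r(1) st2(2)] v1 by simp
      then have "vs ! Suc (Suc m) = vs ! m" using 2 IH(1) by simp
      with \<open>vs ! Suc (Suc m) \<noteq> vs ! m\<close> show ?thesis by simp
    qed
  qed
  have e: "p + int (Suc m) = p + int m + 1" by simp
  show ?case unfolding e using v1 st2(2) r2 by simp
qed

lemma mono:
  assumes L: "lstruct ends V Ed Dm Vd" and W: "uwalk ends vs es" and D: "distinct vs"
    and S: "set es \<subseteq> Ed ` Dm" and ne: "es \<noteq> []" and p: "vs ! 0 = V p" "p \<in> Vd"
  shows "(\<forall>m \<le> length es. vs ! m = V (p + int m) \<and> p + int m \<in> Vd \<and>
            (m < length es \<longrightarrow> es ! m = Ed (p + int m))) \<or>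
         (\<forall>m \<le> length es. vs ! m = V (p - int m) \<and> p - int m \<in> Vd \<and>
            (m < length es \<longrightarrow> es ! m = Ed (p - int m - 1)))"
proof -
  have l0: "0 < length es" using ne by simp
  obtain r where r: "r \<in> Dm" "es ! 0 = Ed r" using S l0 by (meson image_iff nth_mem subsetD)
  have "ustep ends (vs ! 0) (es ! 0) (vs ! Suc 0)" using W l0 unfolding uwalk_def by blast
  then have st3: "ustep ends (vs ! 0) (Ed r) (vs ! Suc 0)" using r by simp
  have st4: "ustep ends (V r) (Ed r) (V (r+1))" using lstructD1[OF L r(1)] by simp
  consider "vs ! 0 = V r" | "vs ! 0 = V (r+1)" using ustep_uniq[OF st3 st4] by blast
  then show ?thesis
  proof cases
    case 1
    then have h: "Ed p = Ed r" "p \<in> Dm" using lstructD2[OF L r(1) p(2)] p(1) by simp_all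
    have fw: "\<And>m. m \<le> length es \<Longrightarrow> vs ! m = V (p + int m) \<and> p + int m \<in> Vd \<and>
       (m < length es \<longrightarrow> es ! m = Ed (p + int m) \<and> p + int m \<in> Dm)"
      using mono_fw[OF L W D S p(1) h(2)] r(2) h(1) by simp
    show ?thesis by (rule disjI1) (use fw in blast)
  next
    case 2
    then have e: "Ed (p-1) = Ed r" "p - 1 \<in> Dm" using lstructD3[OF L r(1) p(2)] p(1) by simp_all
    let ?V = "\<lambda>r. V (-r)" and ?E = "\<lambda>r. Ed (-r-1)"
    have L': "lstruct ends ?V ?E {r. -r-1 \<in> Dm} {r. -r \<in> Vd}" by (rule lstruct_rev[OF L])
    have S': "set es \<subseteq> ?E ` {r. -r-1 \<in> Dm}"
    proof
      fix x assume "x \<in> set es"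
      then obtain t where "t \<in> Dm" "x = Ed t" using S by auto
      then show "x \<in> ?E ` {r. -r-1 \<in> Dm}" by (intro image_eqI[of _ _ "-t-1"]) auto
    qed
    have p': "vs ! 0 = ?V (-p)" "-p \<in> {r. -r-1 \<in> Dm}" "es ! 0 = ?E (-p)" using p e r by simp_all
    have fw: "\<And>m. m \<le> length es \<Longrightarrow> vs ! m = ?V (-p + int m) \<and> -p + int m \<in> {r. -r \<in> Vd} \<and>
       (m < length es \<longrightarrow> es ! m = ?E (-p + int m) \<and> -p + int m \<in> {r. -r-1 \<in> Dm})"
      by (rule mono_fw[OF L' W D S' p'])
    have fw2: "\<And>m. m \<le> length es \<Longrightarrow> vs ! m = V (p - int m) \<and> p - int m \<in> Vd \<and>
       (m < length es \<longrightarrow> es ! m = Ed (p - int m - 1))"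
    proof -
      fix m assume "m \<le> length es"
      from fw[OF this] show "vs ! m = V (p - int m) \<and> p - int m \<in> Vd \<and>
       (m < length es \<longrightarrow> es ! m = Ed (p - int m - 1))" by (simp add: algebra_simps)
    qed
    show ?thesis by (rule disjI2) (use fw2 in blast)
  qed
qed

definition cyc :: "('e \<Rightarrow> 'v \<times> 'v) \<Rightarrow> nat \<Rightarrow> (int \<Rightarrow> 'v) \<Rightarrow> (int \<Rightarrow> 'e) \<Rightarrow> bool" where
  "cyc ends n V Ed \<longleftrightarrow> 0 < n \<and> (\<forall>r. ustep ends (V r) (Ed r) (V (r+1))) \<and>
     (\<forall>r s. V r = V s \<longleftrightarrow> r mod int n = s mod int n) \<and>
     (\<forall>r s. Ed r = Ed s \<longleftrightarrow> r mod int n = s mod int n)"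

lemma cyc_step: "cyc ends n V Ed \<Longrightarrow> ustep ends (V r) (Ed r) (V (r+1))"
  by (simp add: cyc_def)
lemma cyc_V: "cyc ends n V Ed \<Longrightarrow> V r = V s \<longleftrightarrow> r mod int n = s mod int n"
  by (simp add: cyc_def)
lemma cyc_E: "cyc ends n V Ed \<Longrightarrow> Ed r = Ed s \<longleftrightarrow> r mod int n = s mod int n"
  by (simp add: cyc_def)
lemma cyc_n: "cyc ends n V Ed \<Longrightarrow> 0 < n"
  by (simp add: cyc_def)

lemma cyc_lstruct: assumes "cyc ends n V Ed" shows "lstruct ends V Ed UNIV UNIV"
  unfolding lstruct_def
proof (intro conjI ballI impI)
  fix r s :: int
  show "ustep ends (V r) (Ed r) (V (r+1))" using assms by (simp add: cyc_def)
  show "r \<in> UNIV" "r + 1 \<in> UNIV" "s \<in> UNIV" "s - 1 \<in> UNIV" by simp_all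
  {
    assume "V s = V r"
    then have m: "s mod int n = r mod int n" using assms by (simp add: cyc_def)
    then show "Ed s = Ed r" using assms by (simp add: cyc_def)
    have "(s+1) mod int n = (r+1) mod int n" using m by (metis mod_add_left_eq)
    then show "V (s+1) = V (r+1)" using assms by (simp add: cyc_def)
  }
  {
    assume "V s = V (r+1)"
    then have m: "s mod int n = (r+1) mod int n" using assms by (simp add: cyc_def)
    have "(s-1) mod int n = (r+1-1) mod int n" using m by (metis mod_diff_left_eq)
    then show "V (s-1) = V r" "Ed (s-1) = Ed r" using assms by (simp_all add: cyc_def)
  }
qed

lemma modeq_small: "(r::int) mod n = s mod n \<Longrightarrow> \<bar>r - s\<bar> < n \<Longrightarrow> r = s"
proof (rule ccontr)
  assume a: "r mod n = s mod n" "\<bar>r - s\<bar> < n" "r \<noteq> s"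
  then have "n dvd r - s" by (simp add: mod_eq_dvd_iff)
  then have "\<bar>n\<bar> \<le> \<bar>r - s\<bar>" using a(3) by (intro dvd_imp_le_int) auto
  then show False using a(2) by linarith
qed

lemma cyc_Vinj: "cyc ends n V Ed \<Longrightarrow> V (q + int a) = V (q + int b) \<Longrightarrow> a < n \<Longrightarrow> b < n \<Longrightarrow> a = b"
  using modeq_small[of "q + int a" "int n" "q + int b"] by (auto simp: cyc_def)

lemma cyc_Einj: "cyc ends n V Ed \<Longrightarrow> Ed (q + int a) = Ed (q + int b) \<Longrightarrow> a < n \<Longrightarrow> b < n \<Longrightarrow> a = b"
  using modeq_small[of "q + int a" "int n" "q + int b"] by (auto simp: cyc_def)

lemma cycle_param:
  assumes c: "is_cycle dir ends E cvs ces"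
  defines "n \<equiv> length ces"
  shows "cyc ends n (\<lambda>r. cvs ! nat (r mod int n)) (\<lambda>r. ces ! nat (r mod int n)) \<and>
         set ces = range (\<lambda>r. ces ! nat (r mod int n))"
proof -
  have w: "is_walk dir ends E cvs ces" and ne: "ces \<noteq> []" and hl: "hd cvs = last cvs"
    and dt: "distinct (tl cvs)" and de: "distinct ces" using c by (auto simp: is_cycle_def)
  have lv: "length cvs = Suc n" using w by (simp add: is_walk_def n_def)
  have n0: "0 < n" using ne by (simp add: n_def)
  have "cvs \<noteq> []" using lv by auto
  then have c0: "cvs ! 0 = cvs ! n" using hl lv by (simp add: hd_conv_nth last_conv_nth)
  define V where "V = (\<lambda>r. cvs ! nat (r mod int n))"
  define Ed where "Ed = (\<lambda>r. ces ! nat (r mod int n))"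
  have st: "ustep ends (V r) (Ed r) (V (r+1))" for r
  proof -
    define i where "i = nat (r mod int n)"
    have i: "i < n" "int i = r mod int n" using n0 by (auto simp: i_def nat_less_iff)
    have s: "ustep ends (cvs ! i) (ces ! i) (cvs ! Suc i)" using w i by (auto simp: is_walk_def n_def intro: step_ustep)
    have "cvs ! Suc i = V (r+1)"
    proof (cases "Suc i < n")
      case True
      have "(r+1) mod int n = (r mod int n + 1) mod int n" by (simp add: mod_add_left_eq)
      also have "\<dots> = int (Suc i)" using i True by (simp add: mod_pos_pos_trivial)
      finally have "(r+1) mod int n = int (Suc i)" .
      then have "nat ((r+1) mod int n) = Suc i" by (simp only: nat_int)
      then show ?thesis by (simp add: V_def)
    next
      case False
      then have "Suc i = n" using i by simp
      have "(r+1) mod int n = (r mod int n + 1) mod int n" by (simp add: mod_add_left_eq)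
      also have "r mod int n + 1 = int n" using i \<open>Suc i = n\<close> by simp
      then have "(r mod int n + 1) mod int n = 0" by simp
      finally have "(r+1) mod int n = 0" .
      then show ?thesis using c0 \<open>Suc i = n\<close> by (simp add: V_def)
    qed
    then show ?thesis using s by (simp add: V_def Ed_def i_def)
  qed
  have idx: "cvs ! i = cvs ! j \<Longrightarrow> i < n \<Longrightarrow> j < n \<Longrightarrow> i = j" for i j
  proof -
    assume e: "cvs ! i = cvs ! j" "i < n" "j < n"
    define f where "f = (\<lambda>t. if t = 0 then n - 1 else t - 1)"
    have f: "t < n \<Longrightarrow> tl cvs ! f t = cvs ! t \<and> f t < n" for t
      using c0 lv n0 by (auto simp: f_def nth_tl)
    have "tl cvs ! f i = tl cvs ! f j" using f e by simp
    moreover have "f i < length (tl cvs)" "f j < length (tl cvs)" using f e lv by auto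
    ultimately have "f i = f j" using nth_eq_iff_index_eq[OF dt] by blast
    then show "i = j" using e n0 by (auto simp: f_def split: if_splits)
  qed
  have Veq: "V r = V s \<longleftrightarrow> r mod int n = s mod int n" for r s
  proof
    assume "V r = V s"
    moreover have "nat (r mod int n) < n" "nat (s mod int n) < n" using n0 by (simp_all add: nat_less_iff)
    ultimately have "nat (r mod int n) = nat (s mod int n)" using idx by (simp add: V_def)
    then show "r mod int n = s mod int n" using n0 by (subst (asm) eq_nat_nat_iff) auto
  qed (simp add: V_def)
  have Eeq: "Ed r = Ed s \<longleftrightarrow> r mod int n = s mod int n" for r s
  proof
    assume "Ed r = Ed s"
    moreover have "nat (r mod int n) < length ces" "nat (s mod int n) < length ces" using n0 by (simp_all add: nat_less_iff n_def)
    ultimately have "nat (r mod int n) = nat (s mod int n)" using nth_eq_iff_index_eq[OF de] by (simp add: Ed_def)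
    then show "r mod int n = s mod int n" using n0 by (subst (asm) eq_nat_nat_iff) auto
  qed (simp add: Ed_def)
  have rng: "set ces = range Ed"
  proof
    show "set ces \<subseteq> range Ed"
    proof
      fix x assume "x \<in> set ces"
      then obtain i where "i < n" "x = ces ! i" by (auto simp: in_set_conv_nth n_def)
      then show "x \<in> range Ed" by (intro range_eqI[of _ _ "int i"]) (simp add: Ed_def)
    qed
    have "nat (r mod int n) < n" for r using n0 by (metis nat_less_iff of_nat_0_less_iff pos_mod_bound pos_mod_sign)
    then show "range Ed \<subseteq> set ces" by (auto simp: Ed_def n_def intro!: nth_mem)
  qed
  have "cyc ends n V Ed" unfolding cyc_def using st Veq Eeq n0 by blast
  then have "cyc ends n V Ed \<and> set ces = range Ed" using rng by blast
  then show ?thesis by (simp only: V_def Ed_def)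
qed

lemma cycle_edges_cyc:
  assumes "cycle_edges dir ends E C"
  shows "\<exists>n V Ed. cyc ends n V Ed \<and> C = range Ed \<and> finite C"
proof -
  obtain cvs ces where "is_cycle dir ends E cvs ces" "C = set ces" using assms by (auto simp: cycle_edges_def)
  then show ?thesis using cycle_param by blast
qed

definition arc :: "(int \<Rightarrow> 'e) \<Rightarrow> int \<Rightarrow> nat \<Rightarrow> 'e set" where
  "arc Ed q k = (\<lambda>m. Ed (q + int m)) ` {..<k}"

lemma arc_Suc: "arc Ed q (Suc k) = insert (Ed (q + int k)) (arc Ed q k)"
  by (simp add: arc_def lessThan_Suc)

lemma arc_sub: "arc Ed q k \<subseteq> range Ed"
  by (auto simp: arc_def)

lemma verts_arc:
  assumes c: "cyc ends n V Ed" and k: "0 < k"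
  shows "verts ends (arc Ed q k) = (\<lambda>m. V (q + int m)) ` {..k}"
proof
  show "verts ends (arc Ed q k) \<subseteq> (\<lambda>m. V (q + int m)) ` {..k}"
  proof
    fix x assume "x \<in> verts ends (arc Ed q k)"
    then obtain m where m: "m < k" "x = fst (ends (Ed (q + int m))) \<or> x = snd (ends (Ed (q + int m)))"
      by (auto simp: verts_iff arc_def)
    have "ustep ends (V (q + int m)) (Ed (q + int m)) (V (q + int m + 1))" using cyc_step[OF c] .
    then have "x = V (q + int m) \<or> x = V (q + int (Suc m))" using m by (auto simp: ustep_def algebra_simps)
    then show "x \<in> (\<lambda>m. V (q + int m)) ` {..k}"
    proof
      assume "x = V (q + int m)" then show ?thesis using m(1) by (intro image_eqI[of _ _ m]) auto
    next
      assume "x = V (q + int (Suc m))" then show ?thesis using m(1) by (intro image_eqI[of _ _ "Suc m"]) auto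
    qed
  qed
  show "(\<lambda>m. V (q + int m)) ` {..k} \<subseteq> verts ends (arc Ed q k)"
  proof
    fix x assume "x \<in> (\<lambda>m. V (q + int m)) ` {..k}"
    then obtain m where m: "m \<le> k" "x = V (q + int m)" by auto
    show "x \<in> verts ends (arc Ed q k)"
    proof (cases "m < k")
      case True
      then have "Ed (q + int m) \<in> arc Ed q k" by (auto simp: arc_def)
      then show ?thesis using ustep_verts[OF cyc_step[OF c]] m by blast
    next
      case False
      then have m': "m = Suc (k - 1)" using m k by simp
      then have "Ed (q + int (k-1)) \<in> arc Ed q k" using k by (auto simp: arc_def intro!: image_eqI[of _ _ "k-1"])
      moreover have "V (q + int (k-1) + 1) = x" using m' m by (simp add: algebra_simps)
      ultimately show ?thesis using ustep_verts[OF cyc_step[OF c]] by metis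
    qed
  qed
qed

lemma arc_mem:
  assumes c: "cyc ends n V Ed" and k: "k \<le> n"
  shows "Ed r \<in> arc Ed q k \<longleftrightarrow> nat ((r - q) mod int n) < k"
proof
  have n0: "0 < n" using cyc_n[OF c] .
  assume "Ed r \<in> arc Ed q k"
  then obtain m where m: "m < k" "Ed r = Ed (q + int m)" by (auto simp: arc_def)
  then have "r mod int n = (q + int m) mod int n" using c by (simp add: cyc_def)
  then have "int n dvd r - (q + int m)" by (simp add: mod_eq_dvd_iff)
  then have "int n dvd (r - q) - int m" by (simp add: algebra_simps)
  then have "(r - q) mod int n = int m mod int n" by (simp add: mod_eq_dvd_iff)
  also have "\<dots> = int m" using m k by simp
  finally show "nat ((r - q) mod int n) < k" using m by simp
next
  have n0: "0 < n" using cyc_n[OF c] .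
  assume a: "nat ((r - q) mod int n) < k"
  define m where "m = nat ((r - q) mod int n)"
  have "int m = (r - q) mod int n" using n0 by (simp add: m_def)
  then have "(q + int m) mod int n = r mod int n" by (metis add.commute diff_add_cancel mod_add_right_eq)
  then have "Ed (q + int m) = Ed r" using c by (simp add: cyc_def)
  then show "Ed r \<in> arc Ed q k" using a by (auto simp: arc_def m_def intro!: image_eqI[of _ _ m])
qed

lemma arc_compl:
  assumes c: "cyc ends n V Ed" and k: "k \<le> n"
  shows "range Ed - arc Ed q k = arc Ed (q + int k) (n - k)"
proof -
  have n0: "0 < n" using cyc_n[OF c] .
  have key: "\<not> nat ((r - q) mod int n) < k \<longleftrightarrow> nat ((r - (q + int k)) mod int n) < n - k" for r
  proof -
    define u where "u = (r - q) mod int n"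
    have u: "0 \<le> u" "u < int n" using n0 by (auto simp: u_def)
    have e: "(r - (q + int k)) mod int n = (u - int k) mod int n"
      by (simp add: u_def mod_diff_left_eq algebra_simps)
    show ?thesis
    proof (cases "int k \<le> u")
      case True
      then have "(u - int k) mod int n = u - int k" using u by (intro mod_pos_pos_trivial) auto
      then show ?thesis using True u e k unfolding u_def[symmetric] by auto
    next
      case False
      have "(u - int k) mod int n = (u - int k + int n) mod int n" by simp
      also have "\<dots> = u - int k + int n" using u k False by (intro mod_pos_pos_trivial) auto
      finally have "(u - int k) mod int n = u - int k + int n" .
      then show ?thesis using False u e k unfolding u_def[symmetric] by auto
    qed
  qed
  show ?thesis
  proof
    show "range Ed - arc Ed q k \<subseteq> arc Ed (q + int k) (n - k)"
    proof
      fix x assume x: "x \<in> range Ed - arc Ed q k"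
      then obtain r where r: "x = Ed r" by auto
      then have "\<not> nat ((r - q) mod int n) < k" using x arc_mem[OF c k, of r q] by simp
      then have "nat ((r - (q + int k)) mod int n) < n - k" using key[of r] by simp
      then show "x \<in> arc Ed (q + int k) (n - k)" using r arc_mem[OF c, of "n-k" r "q + int k"] by simp
    qed
    show "arc Ed (q + int k) (n - k) \<subseteq> range Ed - arc Ed q k"
    proof
      fix x assume x: "x \<in> arc Ed (q + int k) (n - k)"
      then obtain r where r: "x = Ed r" by (auto simp: arc_def)
      then have "nat ((r - (q + int k)) mod int n) < n - k" using x arc_mem[OF c, of "n-k" r "q + int k"] by simp
      then have "\<not> nat ((r - q) mod int n) < k" using key[of r] by simp
      then show "x \<in> range Ed - arc Ed q k" using r arc_mem[OF c k, of r q] by simp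
    qed
  qed
qed

lemma arc_trans:
  assumes c: "cyc ends n V Ed" and sub: "arc Ed q k \<subseteq> X \<union> Y" and XY: "X \<inter> Y = {}"
    and vs: "verts ends X \<inter> verts ends Y \<subseteq> S"
    and int: "\<forall>m. 0 < m \<and> m < k \<longrightarrow> V (q + int m) \<notin> S"
  shows "arc Ed q k \<subseteq> X \<or> arc Ed q k \<subseteq> Y"
  using sub int
proof (induction k)
  case 0
  then show ?case by (simp add: arc_def)
next
  case (Suc k)
  have IH: "arc Ed q k \<subseteq> X \<or> arc Ed q k \<subseteq> Y" using Suc by (simp add: arc_Suc)
  have new: "Ed (q + int k) \<in> X \<union> Y" using Suc.prems by (simp add: arc_Suc)
  show ?case
  proof (cases k)
    case 0
    then show ?thesis using new by (auto simp: arc_def)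
  next
    case (Suc k')
    have old: "Ed (q + int k') \<in> arc Ed q k" using Suc by (auto simp: arc_def)
    have s1: "V (q + int k) \<in> verts ends {Ed (q + int k')}"
      using ustep_verts[OF cyc_step[OF c], of "q + int k'" "{Ed (q + int k')}"] Suc by (simp add: algebra_simps)
    have s2: "V (q + int k) \<in> verts ends {Ed (q + int k)}"
      using ustep_verts[OF cyc_step[OF c], of "q + int k" "{Ed (q + int k)}"] by simp
    have nS: "V (q + int k) \<notin> S" using Suc.prems(2) Suc by auto
    have "\<not> (Ed (q + int k') \<in> X \<and> Ed (q + int k) \<in> Y)"
      using s1 s2 nS vs verts_mono[of "{Ed (q + int k')}" X ends] verts_mono[of "{Ed (q + int k)}" Y ends] by auto
    moreover have "\<not> (Ed (q + int k') \<in> Y \<and> Ed (q + int k) \<in> X)"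
      using s1 s2 nS vs verts_mono[of "{Ed (q + int k')}" Y ends] verts_mono[of "{Ed (q + int k)}" X ends] by auto
    ultimately show ?thesis using IH old new XY by (auto simp: arc_Suc)
  qed
qed

lemma cyc_path:
  assumes c: "cyc ends n V Ed" and W: "uwalk ends vs es" and D: "distinct vs"
    and S: "set es \<subseteq> range Ed" and ne: "es \<noteq> []"
  shows "\<exists>q k. 0 < k \<and> k < n \<and> set es = arc Ed q k \<and>
     ((vs ! 0 = V q \<and> vs ! length es = V (q + int k)) \<or> (vs ! 0 = V (q + int k) \<and> vs ! length es = V q))"
proof -
  define L where "L = length es"
  have L0: "0 < L" using ne by (simp add: L_def)
  have lv: "length vs = Suc L" using W by (simp add: uwalk_def L_def)
  obtain r where r: "es ! 0 = Ed r" using S ne by (metis imageE length_greater_0_conv nth_mem subsetD)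
  have "ustep ends (vs ! 0) (es ! 0) (vs ! Suc 0)" using W ne unfolding uwalk_def by simp
  then have "vs ! 0 = V r \<or> vs ! 0 = V (r+1)" using ustep_uniq[OF _ cyc_step[OF c, of r]] r by auto
  then obtain p where p: "vs ! 0 = V p" by blast
  have M: "(\<forall>m \<le> L. vs ! m = V (p + int m) \<and> p + int m \<in> UNIV \<and> (m < L \<longrightarrow> es ! m = Ed (p + int m))) \<or>
        (\<forall>m \<le> L. vs ! m = V (p - int m) \<and> p - int m \<in> UNIV \<and> (m < L \<longrightarrow> es ! m = Ed (p - int m - 1)))"
    using mono[OF cyc_lstruct[OF c] W D S ne p UNIV_I] unfolding L_def .
  have Ln: "L < n"
  proof (rule ccontr)
    assume "\<not> L < n"
    then have nL: "n \<le> L" by simp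
    have "V (p + int n) = V p" "V (p - int n) = V p" using c by (simp_all add: cyc_def)
    moreover have "vs ! n = V (p + int n) \<or> vs ! n = V (p - int n)" using M nL by blast
    ultimately have "vs ! n = vs ! 0" using p by auto
    then show False using D lv nL cyc_n[OF c] by (simp add: nth_eq_iff_index_eq)
  qed
  from M have "(\<forall>m \<le> L. vs ! m = V (p + int m) \<and> (m < L \<longrightarrow> es ! m = Ed (p + int m))) \<or>
        (\<forall>m \<le> L. vs ! m = V (p - int m) \<and> (m < L \<longrightarrow> es ! m = Ed (p - int m - 1)))"
    by blast
  then show ?thesis
  proof
    assume f: "\<forall>m \<le> L. vs ! m = V (p + int m) \<and> (m < L \<longrightarrow> es ! m = Ed (p + int m))"
    have "set es = arc Ed p L"
    proof
      show "set es \<subseteq> arc Ed p L"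
      proof
        fix x assume "x \<in> set es"
        then obtain m where m: "m < L" "x = es ! m" by (auto simp: in_set_conv_nth L_def)
        then show "x \<in> arc Ed p L" using f by (auto simp: arc_def)
      qed
      show "arc Ed p L \<subseteq> set es"
      proof
        fix x assume "x \<in> arc Ed p L"
        then obtain t where t: "t < L" "x = Ed (p + int t)" by (auto simp: arc_def)
        then have "x = es ! t" using f by simp
        then show "x \<in> set es" using t by (simp add: L_def)
      qed
    qed
    moreover have "vs ! L = V (p + int L)" using f by auto
    ultimately show ?thesis using L0 Ln p by (auto simp: L_def)
  next
    assume b: "\<forall>m \<le> L. vs ! m = V (p - int m) \<and> (m < L \<longrightarrow> es ! m = Ed (p - int m - 1))"
    have "set es = arc Ed (p - int L) L"
    proof
      show "set es \<subseteq> arc Ed (p - int L) L"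
      proof
        fix x assume "x \<in> set es"
        then obtain m where m: "m < L" "x = es ! m" by (auto simp: in_set_conv_nth L_def)
        have "int (L - 1 - m) = int L - 1 - int m" using m by linarith
        then have eq: "p - int L + int (L - 1 - m) = p - int m - 1" by simp
        from b m have "x = Ed (p - int m - 1)" by simp
        then have "x = Ed (p - int L + int (L - 1 - m))" by (subst eq)
        then show "x \<in> arc Ed (p - int L) L" unfolding arc_def using m
          by (intro image_eqI[of _ _ "L - 1 - m"]) simp_all
      qed
      show "arc Ed (p - int L) L \<subseteq> set es"
      proof
        fix x assume "x \<in> arc Ed (p - int L) L"
        then obtain t where t: "t < L" "x = Ed (p - int L + int t)" by (auto simp: arc_def)
        have "int (L - 1 - t) = int L - 1 - int t" using t by linarith
        then have "p - int (L - 1 - t) - 1 = p - int L + int t" by simp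
        have bb: "\<And>m. m < L \<Longrightarrow> es ! m = Ed (p - int m - 1)" using b by auto
        have "L - 1 - t < L" using t by simp
        then have e1: "es ! (L - 1 - t) = Ed (p - int (L - 1 - t) - 1)" by (rule bb)
        have e2: "p - int (L - 1 - t) - 1 = p - int L + int t" by fact
        have "x = es ! (L - 1 - t)" using t(2) e1 e2 by metis
        then show "x \<in> set es" using t by (simp add: L_def)
      qed
    qed
    moreover have "vs ! L = V (p - int L)" using b by auto
    ultimately show ?thesis using L0 Ln p
      by (intro exI[of _ "p - int L"] exI[of _ L]) (auto simp: L_def)
  qed
qed




lemma lin_lstruct:
  assumes W: "uwalk ends pvs pes" and D: "distinct pvs"
  shows "lstruct ends (\<lambda>r. pvs ! nat r) (\<lambda>r. pes ! nat r) {0..<int (length pes)} {0..int (length pes)}"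
  unfolding lstruct_def
proof (intro conjI ballI impI)
  have lv: "length pvs = Suc (length pes)" using W by (simp add: uwalk_def)
  {
    fix r assume r: "r \<in> {0..<int (length pes)}"
    then have h: "nat r < length pes" "nat (r+1) = Suc (nat r)" by auto
    then show "ustep ends (pvs ! nat r) (pes ! nat r) (pvs ! nat (r+1))" using W by (simp add: uwalk_def)
    show "r \<in> {0..int (length pes)}" "r + 1 \<in> {0..int (length pes)}" using r by auto
  }
  {
    fix r s assume r: "r \<in> {0..<int (length pes)}" and s: "s \<in> {0..int (length pes)}"
      and e: "pvs ! nat s = pvs ! nat r"
    have "nat s < length pvs" "nat r < length pvs" using r s lv by auto
    then have "nat s = nat r" using e nth_eq_iff_index_eq[OF D] by blast
    then have "s = r" using r s by (subst (asm) eq_nat_nat_iff) auto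
    then show "pes ! nat s = pes ! nat r" "pvs ! nat (s+1) = pvs ! nat (r+1)" "s \<in> {0..<int (length pes)}"
      using r by auto
  }
  {
    fix r s assume r: "r \<in> {0..<int (length pes)}" and s: "s \<in> {0..int (length pes)}"
      and e: "pvs ! nat s = pvs ! nat (r+1)"
    have "nat s < length pvs" "nat (r+1) < length pvs" using r s lv by auto
    then have "nat s = nat (r+1)" using e nth_eq_iff_index_eq[OF D] by blast
    then have "s = r + 1" using r s by (subst (asm) eq_nat_nat_iff) auto
    then show "pvs ! nat (s-1) = pvs ! nat r" "pes ! nat (s-1) = pes ! nat r" "s - 1 \<in> {0..<int (length pes)}"
      using r by auto
  }
qed

lemma path_facts:
  assumes "is_path dir ends C a b vs es"
  shows "uwalk ends vs es" "distinct vs" "set es \<subseteq> C" "vs ! 0 = a" "vs ! length es = b"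
    "length vs = Suc (length es)"
proof -
  have w: "is_walk dir ends C vs es" and d: "distinct vs" and h: "hd vs = a" "last vs = b"
    using assms by (auto simp: is_path_def)
  have lv: "length vs = Suc (length es)" using w by (simp add: is_walk_def)
  show "uwalk ends vs es" using w by (rule walk_uwalk)
  show "distinct vs" by (rule d)
  show "set es \<subseteq> C" using w by (simp add: is_walk_def)
  have ne: "vs \<noteq> []" using lv by auto
  show "vs ! 0 = a" using h ne by (simp add: hd_conv_nth)
  show "vs ! length es = b" using h ne lv by (simp add: last_conv_nth)
  show "length vs = Suc (length es)" by (rule lv)
qed

lemma path_ne: "is_path dir ends C a b vs es \<Longrightarrow> a \<noteq> b \<Longrightarrow> es \<noteq> []"
  using path_facts[of dir ends C a b vs es] by auto

lemma path_triv: "is_path dir ends C a a vs es \<Longrightarrow> es = []"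
proof (rule ccontr)
  assume p: "is_path dir ends C a a vs es" and ne: "es \<noteq> []"
  have "vs ! 0 = vs ! length es" using path_facts[OF p] by simp
  moreover have "length es < length vs" using path_facts(6)[OF p] by simp
  moreover have "0 < length vs" using path_facts(6)[OF p] by simp
  ultimately have "0 = length es" using nth_eq_iff_index_eq[OF path_facts(2)[OF p], of 0 "length es"] by simp
  then show False using ne by simp
qed

lemma path_seg:
  assumes P: "is_path dir ends C a b vs es" and ij: "i \<le> j" "j \<le> length es"
  shows "is_path dir ends C (vs ! i) (vs ! j) (take (j-i+1) (drop i vs)) (take (j-i) (drop i es))"
proof -
  have w: "is_walk dir ends C vs es" and dv: "distinct vs" using P by (auto simp: is_path_def)
  have lv: "length vs = Suc (length es)" and st: "\<forall>t<length es. step dir ends (vs!t) (es!t) (vs!Suc t)"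
    and sub: "set es \<subseteq> C" using w by (auto simp: is_walk_def)
  define vs' where "vs' = take (j-i+1) (drop i vs)"
  define es' where "es' = take (j-i) (drop i es)"
  have l1: "length vs' = Suc (j-i)" using ij lv by (simp add: vs'_def)
  have l2: "length es' = j - i" using ij by (simp add: es'_def)
  have n1: "\<And>t. t \<le> j - i \<Longrightarrow> vs' ! t = vs ! (i+t)" using ij lv by (simp add: vs'_def)
  have n2: "\<And>t. t < j - i \<Longrightarrow> es' ! t = es ! (i+t)" using ij by (simp add: es'_def)
  have s1: "set es' \<subseteq> C" using sub set_take_subset set_drop_subset unfolding es'_def by (metis order_trans)
  have s2: "\<forall>t<length es'. step dir ends (vs'!t) (es'!t) (vs'!Suc t)"
  proof (intro allI impI)
    fix t assume t: "t < length es'"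
    then have "i + t < length es" using l2 ij by simp
    then have "step dir ends (vs!(i+t)) (es!(i+t)) (vs!Suc (i+t))" using st by blast
    then show "step dir ends (vs'!t) (es'!t) (vs'!Suc t)" using n1 n2 t l2 by simp
  qed
  have d: "distinct vs'" using dv by (simp add: vs'_def)
  have "vs' \<noteq> []" using l1 by auto
  then have h: "hd vs' = vs ! i" using n1[of 0] l1 by (simp add: hd_conv_nth)
  from \<open>vs' \<noteq> []\<close> have la: "last vs' = vs ! j" using n1[of "j-i"] l1 ij by (simp add: last_conv_nth)
  show ?thesis unfolding is_path_def is_walk_def vs'_def[symmetric] es'_def[symmetric]
    using l1 l2 s1 s2 d h la by simp
qed

lemma seg_set: "i \<le> j \<Longrightarrow> j \<le> length es \<Longrightarrow> set (take (j-i) (drop i es)) = (\<lambda>m. es ! m) ` {i..<j}"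
proof
  assume ij: "i \<le> j" "j \<le> length es"
  show "set (take (j-i) (drop i es)) \<subseteq> (\<lambda>m. es ! m) ` {i..<j}"
  proof
    fix x assume "x \<in> set (take (j-i) (drop i es))"
    then obtain t where t: "t < length (take (j-i) (drop i es))" "x = take (j-i) (drop i es) ! t"
      by (auto simp: in_set_conv_nth)
    then have "t < j - i" "x = es ! (i + t)" using ij by auto
    then show "x \<in> (\<lambda>m. es ! m) ` {i..<j}" by (intro image_eqI[of _ _ "i+t"]) auto
  qed
  show "(\<lambda>m. es ! m) ` {i..<j} \<subseteq> set (take (j-i) (drop i es))"
  proof
    fix x assume "x \<in> (\<lambda>m. es ! m) ` {i..<j}"
    then obtain m where m: "i \<le> m" "m < j" "x = es ! m" by auto
    then have "x = take (j-i) (drop i es) ! (m - i)" "m - i < length (take (j-i) (drop i es))" using ij by auto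
    then show "x \<in> set (take (j-i) (drop i es))" by (metis nth_mem)
  qed
qed

lemma segv_set: "i \<le> j \<Longrightarrow> j < length vs \<Longrightarrow> set (take (j-i+1) (drop i vs)) = (\<lambda>m. vs ! m) ` {i..j}"
proof
  assume ij: "i \<le> j" "j < length vs"
  show "set (take (j-i+1) (drop i vs)) \<subseteq> (\<lambda>m. vs ! m) ` {i..j}"
  proof
    fix x assume "x \<in> set (take (j-i+1) (drop i vs))"
    then obtain t where t: "t < length (take (j-i+1) (drop i vs))" "x = take (j-i+1) (drop i vs) ! t"
      by (auto simp: in_set_conv_nth)
    then have "t \<le> j - i" "x = vs ! (i + t)" using ij by auto
    then show "x \<in> (\<lambda>m. vs ! m) ` {i..j}" using ij by (intro image_eqI[of _ _ "i+t"]) auto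
  qed
  show "(\<lambda>m. vs ! m) ` {i..j} \<subseteq> set (take (j-i+1) (drop i vs))"
  proof
    fix x assume "x \<in> (\<lambda>m. vs ! m) ` {i..j}"
    then obtain m where m: "i \<le> m" "m \<le> j" "x = vs ! m" by auto
    then have "x = take (j-i+1) (drop i vs) ! (m - i)" "m - i < length (take (j-i+1) (drop i vs))" using ij by auto
    then show "x \<in> set (take (j-i+1) (drop i vs))" by (metis nth_mem)
  qed
qed

lemma verts_seg:
  assumes W: "uwalk ends vs es" and ij: "j \<le> length es"
  shows "verts ends ((\<lambda>m. es ! m) ` {i..<j}) \<subseteq> (\<lambda>m. vs ! m) ` {i..j}"
proof
  fix x assume "x \<in> verts ends ((\<lambda>m. es ! m) ` {i..<j})"
  then obtain m where m: "i \<le> m" "m < j" "x = fst (ends (es ! m)) \<or> x = snd (ends (es ! m))"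
    by (auto simp: verts_iff)
  have "ustep ends (vs ! m) (es ! m) (vs ! Suc m)" using W m ij by (simp add: uwalk_def)
  then have "x = vs ! m \<or> x = vs ! Suc m" using m by (auto simp: ustep_def)
  then show "x \<in> (\<lambda>m. vs ! m) ` {i..j}"
  proof
    assume "x = vs ! m" then show ?thesis using m by (intro image_eqI[of _ _ m]) auto
  next
    assume "x = vs ! Suc m" then show ?thesis using m by (intro image_eqI[of _ _ "Suc m"]) auto
  qed
qed

lemma chord:
  assumes P: "is_path dir ends C1 a b pvs pes" and a: "a \<in> verts ends C2" and b: "b \<in> verts ends C2"
    and ns: "\<not> set pes \<subseteq> C2"
  shows "\<exists>i j. i < j \<and> j \<le> length pes \<and> pvs ! i \<in> verts ends C2 \<and> pvs ! j \<in> verts ends C2 \<and>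
     (\<forall>m. i < m \<and> m < j \<longrightarrow> pvs ! m \<notin> verts ends C2) \<and> (\<forall>m. i \<le> m \<and> m < j \<longrightarrow> pes ! m \<notin> C2)"
proof -
  define L where "L = length pes"
  have W: "uwalk ends pvs pes" and p0: "pvs ! 0 = a" and pL: "pvs ! L = b"
    using path_facts[OF P] by (auto simp: L_def)
  from ns obtain x where x: "x \<in> set pes" "x \<notin> C2" by auto
  then obtain m0 where m0: "m0 < L" "pes ! m0 \<notin> C2" by (auto simp: in_set_conv_nth L_def)
  define i where "i = (GREATEST m. m \<le> m0 \<and> pvs ! m \<in> verts ends C2)"
  define j where "j = (LEAST m. m0 < m \<and> m \<le> L \<and> pvs ! m \<in> verts ends C2)"
  have ex1: "0 \<le> m0 \<and> pvs ! 0 \<in> verts ends C2" using p0 a by simp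
  have i1: "i \<le> m0 \<and> pvs ! i \<in> verts ends C2"
    unfolding i_def by (rule GreatestI_nat[where P="\<lambda>m. m \<le> m0 \<and> pvs ! m \<in> verts ends C2" and k=0 and b=m0]) (use ex1 in auto)
  have i2: "\<And>m. m \<le> m0 \<Longrightarrow> pvs ! m \<in> verts ends C2 \<Longrightarrow> m \<le> i"
    unfolding i_def by (rule Greatest_le_nat[where P="\<lambda>m. m \<le> m0 \<and> pvs ! m \<in> verts ends C2" and b=m0]) auto
  have ex2: "m0 < L \<and> L \<le> L \<and> pvs ! L \<in> verts ends C2" using pL b m0 by simp
  have j1: "m0 < j \<and> j \<le> L \<and> pvs ! j \<in> verts ends C2"
    unfolding j_def by (rule LeastI[where P="\<lambda>m. m0 < m \<and> m \<le> L \<and> pvs ! m \<in> verts ends C2" and k=L]) (use ex2 in auto)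
  have j2: "\<And>m. m0 < m \<Longrightarrow> m \<le> L \<Longrightarrow> pvs ! m \<in> verts ends C2 \<Longrightarrow> j \<le> m"
    unfolding j_def by (rule Least_le[where P="\<lambda>m. m0 < m \<and> m \<le> L \<and> pvs ! m \<in> verts ends C2"]) auto
  have int: "\<forall>m. i < m \<and> m < j \<longrightarrow> pvs ! m \<notin> verts ends C2"
  proof (intro allI impI)
    fix m assume m: "i < m \<and> m < j"
    show "pvs ! m \<notin> verts ends C2"
    proof
      assume v: "pvs ! m \<in> verts ends C2"
      show False
      proof (cases "m \<le> m0")
        case True then show False using i2[OF True v] m by simp
      next
        case False then show False using j2[of m] v m j1 by simp
      qed
    qed
  qed
  have edges: "\<forall>m. i \<le> m \<and> m < j \<longrightarrow> pes ! m \<notin> C2"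
  proof (intro allI impI)
    fix m assume m: "i \<le> m \<and> m < j"
    have mL: "m < L" using m j1 by simp
    have st: "ustep ends (pvs ! m) (pes ! m) (pvs ! Suc m)" using W mL by (simp add: uwalk_def L_def)
    show "pes ! m \<notin> C2"
    proof (cases "m = m0")
      case True then show ?thesis using m0 by simp
    next
      case False
      show ?thesis
      proof
        assume e: "pes ! m \<in> C2"
        have vv: "pvs ! m \<in> verts ends C2 \<and> pvs ! Suc m \<in> verts ends C2" using ustep_verts[OF st e] .
        show False
        proof (cases "m < m0")
          case True
          then have "i < Suc m" "Suc m < j" using m j1 by auto
          then show False using int vv by blast
        next
          case False
          then have "i < m" using \<open>m \<noteq> m0\<close> m i1 by simp
          then show False using int vv m by blast
        qed
      qed
    qed
  qed
  show ?thesis using i1 j1 int edges m0 by (intro exI[of _ i] exI[of _ j]) (auto simp: L_def)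
qed

lemma notsub:
  assumes c: "cyc ends n V Ed" and k: "0 < k" "k < n"
    and W: "uwalk ends pvs pes" and D: "distinct pvs" and ij: "i < j" "j \<le> length pes"
    and ep: "{V q, V (q + int k)} = {pvs ! i, pvs ! j}"
    and Q: "\<forall>m. i \<le> m \<and> m < j \<longrightarrow> pes ! m \<notin> range Ed"
  shows "\<not> arc Ed (q + int k) (n - k) \<subseteq> set pes"
proof
  assume sub: "arc Ed (q + int k) (n - k) \<subseteq> set pes"
  define N where "N = n - k"
  have N0: "0 < N" using k by (simp add: N_def)
  define tvs where "tvs = map (\<lambda>m. V (q + int k + int m)) [0..<Suc N]"
  define tes where "tes = map (\<lambda>m. Ed (q + int k + int m)) [0..<N]"
  have lt: "length tvs = Suc N" "length tes = N" by (simp_all add: tvs_def tes_def)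
  have tv: "\<And>m. m \<le> N \<Longrightarrow> tvs ! m = V (q + int k + int m)"
    by (simp add: tvs_def del: upt_Suc)
  have te: "\<And>m. m < N \<Longrightarrow> tes ! m = Ed (q + int k + int m)" by (simp add: tes_def)
  have TW: "uwalk ends tvs tes"
    unfolding uwalk_def
  proof (intro conjI allI impI)
    show "length tvs = Suc (length tes)" using lt by simp
    fix m assume m: "m < length tes"
    have "ustep ends (V (q + int k + int m)) (Ed (q + int k + int m)) (V (q + int k + int m + 1))"
      by (rule cyc_step[OF c])
    then show "ustep ends (tvs ! m) (tes ! m) (tvs ! Suc m)" using m lt tv[of m] tv[of "Suc m"] te[of m]
      by (simp add: algebra_simps)
  qed
  have TD: "distinct tvs"
  proof (subst distinct_conv_nth, intro allI impI)
    fix a b assume ab: "a < length tvs" "b < length tvs" "a \<noteq> b"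
    show "tvs ! a \<noteq> tvs ! b"
    proof
      assume "tvs ! a = tvs ! b"
      then have "V (q + int k + int a) = V (q + int k + int b)" using tv ab lt by simp
      moreover have "a < n" "b < n" using ab lt k by (auto simp: N_def)
      ultimately have "a = b" using cyc_Vinj[OF c, of "q + int k" a b] by simp
      then show False using ab by simp
    qed
  qed
  have TS: "set tes = arc Ed (q + int k) N" by (auto simp: tes_def arc_def)
  have tne: "tes \<noteq> []" using lt N0 by auto
  have vqk: "V q \<noteq> V (q + int k)"
  proof
    assume "V q = V (q + int k)"
    then have "V (q + int 0) = V (q + int k)" by simp
    then have "0 = k" using cyc_Vinj[OF c] k by blast
    then show False using k by simp
  qed
  have pij: "pvs ! i \<noteq> pvs ! j" using D ij W by (simp add: nth_eq_iff_index_eq uwalk_def)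
  obtain l l' where ll: "V (q + int k) = pvs ! l" "V q = pvs ! l'" "(l = i \<and> l' = j) \<or> (l = j \<and> l' = i)"
    using ep vqk pij by (metis doubleton_eq_iff)
  have lL: "l \<le> length pes" "l' \<le> length pes" using ll ij by auto
  have t0: "tvs ! 0 = pvs ! l" using tv[of 0] ll by simp
  have tN: "tvs ! N = pvs ! l'"
  proof -
    have "V (q + int k + int N) = V q" using c k by (simp add: cyc_def N_def of_nat_diff)
    then show ?thesis using tv[of N] ll by simp
  qed
  have LS: "lstruct ends (\<lambda>r. pvs ! nat r) (\<lambda>r. pes ! nat r) {0..<int (length pes)} {0..int (length pes)}"
    by (rule lin_lstruct[OF W D])
  have TS2: "set tes \<subseteq> (\<lambda>r. pes ! nat r) ` {0..<int (length pes)}"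
  proof
    fix x assume "x \<in> set tes"
    then have "x \<in> set pes" using sub TS N_def by auto
    then obtain t where "t < length pes" "x = pes ! t" by (auto simp: in_set_conv_nth)
    then show "x \<in> (\<lambda>r. pes ! nat r) ` {0..<int (length pes)}" by (intro image_eqI[of _ _ "int t"]) auto
  qed
  have t0': "tvs ! 0 = pvs ! nat (int l)" using t0 by simp
  have lv: "length pvs = Suc (length pes)" using W by (simp add: uwalk_def)
  have e0: "tes ! 0 \<in> range Ed" using te[OF N0] by simp
  from mono[OF LS TW TD TS2 tne t0'] lL
  consider (f) "\<forall>m \<le> N. tvs ! m = pvs ! nat (int l + int m) \<and> int l + int m \<in> {0..int (length pes)} \<and>
            (m < N \<longrightarrow> tes ! m = pes ! nat (int l + int m))"
    | (b) "\<forall>m \<le> N. tvs ! m = pvs ! nat (int l - int m) \<and> int l - int m \<in> {0..int (length pes)} \<and>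
            (m < N \<longrightarrow> tes ! m = pes ! nat (int l - int m - 1))"
    using lt by auto
  then show False
  proof cases
    case f
    then have "pvs ! (l + N) = pvs ! l'" "l + N \<le> length pes" using tN by (auto simp: nat_add_distrib)
    then have "l + N = l'" using nth_eq_iff_index_eq[OF D, of "l+N" l'] lv lL by simp
    then have "l = i" "l' = j" using ll(3) N0 ij by auto
    have "tes ! 0 = pes ! i" using f N0 \<open>l = i\<close> by auto
    then show False using Q e0 ij by auto
  next
    case b
    then have h: "pvs ! nat (int l - int N) = pvs ! l'" "int l - int N \<in> {0..int (length pes)}" using tN by auto
    then have "nat (int l - int N) = l'" using nth_eq_iff_index_eq[OF D, of "nat (int l - int N)" l'] lv lL by simp
    then have "l' + N = l" using h(2) by auto
    then have "l = j" "l' = i" using ll(3) N0 ij by auto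
    have "tes ! 0 = pes ! (j - 1)" using b N0 \<open>l = j\<close> ij by (auto simp: nat_diff_distrib)
    moreover have "i \<le> j - 1" "j - 1 < j" using ij by auto
    ultimately show False using Q e0 by metis
  qed
qed


lemma verts_arc2:
  assumes c: "cyc ends n V Ed" and t: "0 < t"
  shows "verts ends (arc Ed (q + int s) t) = (\<lambda>m. V (q + int m)) ` {s..s+t}"
proof -
  have "verts ends (arc Ed (q + int s) t) = (\<lambda>m. V (q + int s + int m)) ` {..t}" by (rule verts_arc[OF c t])
  also have "\<dots> = (\<lambda>m. V (q + int m)) ` {s..s+t}"
  proof
    show "(\<lambda>m. V (q + int s + int m)) ` {..t} \<subseteq> (\<lambda>m. V (q + int m)) ` {s..s+t}"
    proof
      fix x assume "x \<in> (\<lambda>m. V (q + int s + int m)) ` {..t}"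
      then obtain m where "m \<le> t" "x = V (q + int s + int m)" by auto
      then show "x \<in> (\<lambda>m. V (q + int m)) ` {s..s+t}" by (intro image_eqI[of _ _ "s+m"]) (auto simp: algebra_simps)
    qed
    show "(\<lambda>m. V (q + int m)) ` {s..s+t} \<subseteq> (\<lambda>m. V (q + int s + int m)) ` {..t}"
    proof
      fix x assume "x \<in> (\<lambda>m. V (q + int m)) ` {s..s+t}"
      then obtain m where m: "s \<le> m" "m \<le> s + t" "x = V (q + int m)" by auto
      then have "x = V (q + int s + int (m - s))" by (simp add: of_nat_diff algebra_simps)
      then show "x \<in> (\<lambda>m. V (q + int s + int m)) ` {..t}" using m by (intro image_eqI[of _ _ "m-s"]) auto
    qed
  qed
  finally show ?thesis .
qed

lemma arc_split: "arc Ed q (s + t) = arc Ed q s \<union> arc Ed (q + int s) t"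
proof
  show "arc Ed q (s + t) \<subseteq> arc Ed q s \<union> arc Ed (q + int s) t"
  proof
    fix x assume "x \<in> arc Ed q (s + t)"
    then obtain m where m: "m < s + t" "x = Ed (q + int m)" by (auto simp: arc_def)
    show "x \<in> arc Ed q s \<union> arc Ed (q + int s) t"
    proof (cases "m < s")
      case True then show ?thesis using m by (auto simp: arc_def)
    next
      case False
      then have "x = Ed (q + int s + int (m - s))" using m by (simp add: of_nat_diff algebra_simps)
      then show ?thesis using m False unfolding arc_def by (intro UnI2 image_eqI[of _ _ "m - s"]) auto
    qed
  qed
  show "arc Ed q s \<union> arc Ed (q + int s) t \<subseteq> arc Ed q (s + t)"
  proof
    fix x assume "x \<in> arc Ed q s \<union> arc Ed (q + int s) t"
    then show "x \<in> arc Ed q (s + t)"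
    proof
      assume "x \<in> arc Ed q s"
      then obtain m where "m < s" "x = Ed (q + int m)" by (auto simp: arc_def)
      then show ?thesis unfolding arc_def by (intro image_eqI[of _ _ m]) auto
    next
      assume "x \<in> arc Ed (q + int s) t"
      then obtain m where "m < t" "x = Ed (q + int s + int m)" by (auto simp: arc_def)
      then show ?thesis unfolding arc_def by (intro image_eqI[of _ _ "s + m"]) (auto simp: algebra_simps)
    qed
  qed
qed

lemma img_int:
  fixes f :: "nat \<Rightarrow> 'b"
  assumes inj: "\<And>x y. x \<le> K \<Longrightarrow> y \<le> K \<Longrightarrow> f x = f y \<Longrightarrow> x = y" and le: "s \<le> t" "t \<le> u" "u \<le> K"
  shows "f ` {s..t} \<inter> f ` {t..u} \<subseteq> {f t}"
proof
  fix x assume "x \<in> f ` {s..t} \<inter> f ` {t..u}"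
  then obtain a b where ab: "s \<le> a" "a \<le> t" "t \<le> b" "b \<le> u" "x = f a" "x = f b" by auto
  have "a \<le> K" "b \<le> K" "f a = f b" using ab le by auto
  then have "a = b" using inj by blast
  then show "x \<in> {f t}" using ab by simp
qed

definition good :: "'e set set \<Rightarrow> 'e set \<Rightarrow> 'e set \<Rightarrow> 'e set \<Rightarrow> bool" where
  "good CC P X Y \<longleftrightarrow> (\<exists>D\<in>CC. D \<subseteq> P \<union> X \<or> D \<subseteq> P \<union> Y)"

lemma good_sym: "good CC P X Y \<Longrightarrow> good CC P Y X"
  unfolding good_def by blast

lemma good_tr:
  assumes g: "good CC P' X' Y'" and s: "P' \<subseteq> P" "X' \<subseteq> X \<union> P" "Y' \<subseteq> Y \<union> P"
  shows "good CC P X Y"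
proof -
  obtain D where D: "D \<in> CC" "D \<subseteq> P' \<union> X' \<or> D \<subseteq> P' \<union> Y'" using g unfolding good_def by blast
  then have "D \<subseteq> P \<union> X \<or> D \<subseteq> P \<union> Y" using s by blast
  then show ?thesis using D(1) unfolding good_def by blast
qed

definition inst :: "bool \<Rightarrow> ('e \<Rightarrow> 'v \<times> 'v) \<Rightarrow> 'e set \<Rightarrow> 'e set set \<Rightarrow> 'v \<Rightarrow> 'v \<Rightarrow> 'v list \<Rightarrow> 'e list
   \<Rightarrow> 'e set \<Rightarrow> 'e set \<Rightarrow> 'e set \<Rightarrow> bool" where
  "inst dir ends C1 CC a b pvs pes C2 X Y \<longleftrightarrow> is_path dir ends C1 a b pvs pes \<and> C2 \<in> CC \<and> a \<noteq> b \<and>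
     a \<in> verts ends C2 \<and> b \<in> verts ends C2 \<and> C2 = X \<union> Y \<and> X \<inter> Y = {} \<and>
     verts ends X \<inter> verts ends Y \<subseteq> {a, b}"

lemma inst_sym: "inst dir ends C1 CC a b pvs pes C2 X Y \<Longrightarrow> inst dir ends C1 CC a b pvs pes C2 Y X"
  unfolding inst_def by (metis Int_commute Un_commute)

lemma core:
  assumes IH1: "\<And>a' b' pvs' pes' C' X' Y'. length pes' < length pes \<Longrightarrow>
        inst dir ends C1 CC a' b' pvs' pes' C' X' Y' \<Longrightarrow> good CC (set pes') X' Y'"
    and IH2: "\<And>C' X' Y'. card (C' - set pes) < card (C2 - set pes) \<Longrightarrow>
        inst dir ends C1 CC a b pvs pes C' X' Y' \<Longrightarrow> good CC (set pes) X' Y'"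
    and I: "inst dir ends C1 CC a b pvs pes C2 Z W"
    and c: "cyc ends n V Ed" and C2: "C2 = range Ed" and fin: "finite C2"
    and k: "0 < k" "k < n"
    and ij: "i < j" "j \<le> length pes"
    and ep: "{V q, V (q + int k)} = {pvs ! i, pvs ! j}"
    and Qd: "Qs = (\<lambda>m. pes ! m) ` {i..<j}" and QC: "Qs \<inter> C2 = {}"
    and Qv: "verts ends Qs \<inter> verts ends C2 \<subseteq> {V q, V (q + int k)}"
    and D1: "arc Ed q k \<union> Qs \<in> CC"
    and Z0: "Ed q \<in> Z"
  shows "good CC (set pes) Z W"
proof -
  have P: "is_path dir ends C1 a b pvs pes" and ab: "a \<noteq> b" and C2ZW: "C2 = Z \<union> W"
    and ZW: "Z \<inter> W = {}" and vZW: "verts ends Z \<inter> verts ends W \<subseteq> {a, b}"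
    using I by (auto simp: inst_def)
  define L where "L = length pes"
  have Wk: "uwalk ends pvs pes" and D: "distinct pvs" and p0: "pvs ! 0 = a" and pL: "pvs ! L = b"
    and lv: "length pvs = Suc L"
    using path_facts[OF P] by (auto simp: L_def)
  have QP: "Qs \<subseteq> set pes" using Qd ij by auto
  define D1s where "D1s = arc Ed q k \<union> Qs"
  define f where "f = (\<lambda>m::nat. V (q + int m))"
  have f0: "f 0 = V q" by (simp add: f_def)
  have finj: "\<And>x y. x \<le> k \<Longrightarrow> y \<le> k \<Longrightarrow> f x = f y \<Longrightarrow> x = y"
  proof -
    fix x y assume xy: "x \<le> k" "y \<le> k" "f x = f y"
    then have "x < n" "y < n" using k by auto
    then show "x = y" using cyc_Vinj[OF c, of q x y] xy(3) by (simp add: f_def)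
  qed
  have fne: "\<And>x y. x \<le> k \<Longrightarrow> y \<le> k \<Longrightarrow> x \<noteq> y \<Longrightarrow> f x \<noteq> f y" using finj by blast
  have vs_arc: "\<And>s t. 0 < t \<Longrightarrow> verts ends (arc Ed (q + int s) t) = f ` {s..s+t}"
    unfolding f_def by (rule verts_arc2[OF c])
  have vs_arc0: "\<And>t. 0 < t \<Longrightarrow> verts ends (arc Ed q t) = f ` {0..t}"
    using vs_arc[of _ 0] by simp
  have arcC2: "\<And>q' t. arc Ed q' t \<subseteq> C2" using C2 by (simp add: arc_sub)
  have QCv: "verts ends Qs \<inter> verts ends (arc Ed q' t) \<subseteq> {f 0, f k}" for q' t
    using Qv verts_mono[OF arcC2[of q' t], of ends] f0 by (auto simp: f_def)
  have vD1: "verts ends (arc Ed q k) \<subseteq> verts ends D1s" unfolding D1s_def by (rule verts_mono) simp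
  have fD1: "m \<le> k \<Longrightarrow> f m \<in> verts ends D1s" for m using vD1 vs_arc0[OF k(1)] by auto
  have Qnot: "\<forall>m. i \<le> m \<and> m < j \<longrightarrow> pes ! m \<notin> range Ed"
  proof (intro allI impI)
    fix m assume "i \<le> m \<and> m < j"
    then have "pes ! m \<in> Qs" using Qd by auto
    then show "pes ! m \<notin> range Ed" using QC C2 by blast
  qed
  have cardlt: "card (D1s - set pes) < card (C2 - set pes)"
  proof (rule psubset_card_mono)
    show "finite (C2 - set pes)" using fin by simp
    have sub1: "D1s - set pes \<subseteq> C2 - set pes" using QP arcC2 unfolding D1s_def by blast
    have "\<not> arc Ed (q + int k) (n - k) \<subseteq> set pes"
      by (rule notsub[OF c k Wk D ij ep Qnot])
    then obtain e where e: "e \<in> arc Ed (q + int k) (n - k)" "e \<notin> set pes" by blast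
    then have "e \<in> range Ed - arc Ed q k" using arc_compl[OF c, of k q] k by simp
    then have "e \<in> C2 - set pes" "e \<notin> D1s - set pes" using e C2 QP unfolding D1s_def by auto
    then show "D1s - set pes \<subset> C2 - set pes" using sub1 by blast
  qed
  define A where "A = (\<lambda>m::nat. Ed (q + int m) \<in> Z)"
  have sides: "\<And>m. \<not> A m \<Longrightarrow> Ed (q + int m) \<in> W" using C2ZW C2 unfolding A_def by auto
  have sides2: "\<And>m. A m \<Longrightarrow> Ed (q + int m) \<notin> W" using ZW unfolding A_def by auto
  have A0: "A 0" using Z0 by (simp add: A_def)
  have trans: "f m \<in> {a, b}" if m: "0 < m" "A (m - 1) \<noteq> A m" for m
  proof -
    have e1: "q + int (m - 1) + 1 = q + int m" using m by simp
    have v1: "f m \<in> verts ends {Ed (q + int (m-1))}"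
      using ustep_verts[OF cyc_step[OF c, of "q + int (m-1)"], of "{Ed (q + int (m-1))}"] e1 by (simp add: f_def)
    have v2: "f m \<in> verts ends {Ed (q + int m)}"
      using ustep_verts[OF cyc_step[OF c, of "q + int m"], of "{Ed (q + int m)}"] by (simp add: f_def)
    consider "A (m-1)" "\<not> A m" | "\<not> A (m-1)" "A m" using m by blast
    then show ?thesis
    proof cases
      case 1
      then have s1: "{Ed (q + int (m-1))} \<subseteq> Z" and s2: "{Ed (q + int m)} \<subseteq> W" using sides unfolding A_def by auto
      have "f m \<in> verts ends Z" using v1 verts_mono[OF s1, of ends] by blast
      moreover have "f m \<in> verts ends W" using v2 verts_mono[OF s2, of ends] by blast
      ultimately show ?thesis using vZW by blast
    next
      case 2
      then have s1: "{Ed (q + int (m-1))} \<subseteq> W" and s2: "{Ed (q + int m)} \<subseteq> Z" using sides unfolding A_def by auto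
      have "f m \<in> verts ends W" using v1 verts_mono[OF s1, of ends] by blast
      moreover have "f m \<in> verts ends Z" using v2 verts_mono[OF s2, of ends] by blast
      ultimately show ?thesis using vZW by blast
    qed
  qed
  show ?thesis
  proof (cases "\<forall>m<k. A m")
    case True
    have "arc Ed q k \<subseteq> Z"
    proof
      fix x assume "x \<in> arc Ed q k"
      then obtain m where m: "m < k" "x = Ed (q + int m)" by (auto simp: arc_def)
      then have "A m" using True by blast
      then show "x \<in> Z" using m by (simp add: A_def)
    qed
    then have "arc Ed q k \<union> Qs \<subseteq> set pes \<union> Z" using QP by blast
    then show ?thesis using D1 unfolding good_def by blast
  next
    case False
    define t1 where "t1 = (LEAST m. m < k \<and> \<not> A m)"
    have ex1: "\<exists>m. m < k \<and> \<not> A m" using False by blast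
    have t1': "t1 < k \<and> \<not> A t1" unfolding t1_def by (rule LeastI_ex[OF ex1])
    then have t1: "t1 < k" "\<not> A t1" by simp_all
    have t1b: "\<And>m. m < t1 \<Longrightarrow> A m"
    proof -
      fix m assume m: "m < t1"
      then have "\<not> (m < k \<and> \<not> A m)" unfolding t1_def by (rule not_less_Least)
      then show "A m" using m t1 by simp
    qed
    have t10: "0 < t1"
    proof (rule ccontr)
      assume "\<not> 0 < t1" then have "t1 = 0" by simp
      then show False using A0 t1 by simp
    qed
    have "A (t1 - 1)" using t1b t10 by simp
    then have c1: "f t1 \<in> {a, b}" using trans[of t1] t10 t1 by simp
    have Zpart: "arc Ed q t1 \<subseteq> Z"
    proof
      fix x assume "x \<in> arc Ed q t1"
      then obtain m where m: "m < t1" "x = Ed (q + int m)" by (auto simp: arc_def)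
      then have "A m" using t1b by blast
      then show "x \<in> Z" using m by (simp add: A_def)
    qed
    show ?thesis
    proof (cases "\<forall>m. t1 \<le> m \<and> m < k \<longrightarrow> \<not> A m")
      case True
      define Xn where "Xn = arc Ed q t1"
      define Yn where "Yn = arc Ed (q + int t1) (k - t1) \<union> Qs"
      have Wpart: "arc Ed (q + int t1) (k - t1) \<subseteq> W"
      proof
        fix x assume "x \<in> arc Ed (q + int t1) (k - t1)"
        then obtain m where m: "m < k - t1" "x = Ed (q + int t1 + int m)" by (auto simp: arc_def)
        then have "\<not> A (t1 + m)" using True by simp
        then have "Ed (q + int (t1 + m)) \<in> W" by (rule sides)
        moreover have "q + int (t1 + m) = q + int t1 + int m" by simp
        ultimately show "x \<in> W" using m(2) by (simp add: add.assoc)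
      qed
      have "arc Ed q k = arc Ed q t1 \<union> arc Ed (q + int t1) (k - t1)"
        using arc_split[of Ed q t1 "k - t1"] t1 by simp
      then have D1eq: "D1s = Xn \<union> Yn" unfolding D1s_def Xn_def Yn_def by (simp add: Un_assoc)
      have disj: "Xn \<inter> Yn = {}"
        using Zpart Wpart ZW QC arcC2[of q t1] unfolding Xn_def Yn_def by blast
      have vX: "verts ends Xn = f ` {0..t1}" using vs_arc0[OF t10] by (simp add: Xn_def)
      have vY1: "verts ends (arc Ed (q + int t1) (k - t1)) = f ` {t1..k}" using vs_arc[of "k - t1" t1] t1 by simp
      have i1: "f ` {0..t1} \<inter> f ` {t1..k} \<subseteq> {f t1}" by (rule img_int[OF finj]) (use t1 in auto)
      have i2: "verts ends Qs \<inter> f ` {0..t1} \<subseteq> {f 0}"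
      proof
        fix x assume x: "x \<in> verts ends Qs \<inter> f ` {0..t1}"
        then obtain y where y: "y \<le> t1" "x = f y" by auto
        have "x \<in> verts ends (arc Ed q t1)" using x by (simp add: vs_arc0[OF t10])
        then have "x \<in> {f 0, f k}" using QCv[of q t1] x by blast
        moreover have "x \<noteq> f k"
        proof
          assume "x = f k"
          then have "y = k" using finj[of y k] y t1 by simp
          then show False using y t1 by simp
        qed
        ultimately show "x \<in> {f 0}" by simp
      qed
      have VV: "verts ends Xn \<inter> verts ends Yn \<subseteq> {f 0, f t1}"
      proof
        fix x assume x: "x \<in> verts ends Xn \<inter> verts ends Yn"
        then have x1: "x \<in> f ` {0..t1}" using vX by simp
        have "x \<in> verts ends (arc Ed (q + int t1) (k - t1)) \<or> x \<in> verts ends Qs"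
          using x unfolding Yn_def verts_Un by simp
        then show "x \<in> {f 0, f t1}"
        proof
          assume "x \<in> verts ends (arc Ed (q + int t1) (k - t1))"
          then have "x \<in> f ` {t1..k}" using vY1 by simp
          then show ?thesis using i1 x1 by blast
        next
          assume "x \<in> verts ends Qs"
          then show ?thesis using i2 x1 by blast
        qed
      qed
      have trf: "good CC P' Xn Yn \<Longrightarrow> P' \<subseteq> set pes \<Longrightarrow> good CC (set pes) Z W" for P'
        by (rule good_tr) (use Zpart Wpart QP in \<open>auto simp: Xn_def Yn_def\<close>)
      have D1m: "D1s \<in> CC" using D1 by (simp add: D1s_def)
      show ?thesis
      proof (cases "f 0 \<in> {a, b}")
        case True
        have ne: "f 0 \<noteq> f t1" using fne[of 0 t1] t10 t1 by simp
        have abf: "{a, b} = {f 0, f t1}" using True c1 ne ab by auto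
        have "inst dir ends C1 CC a b pvs pes D1s Xn Yn"
          unfolding inst_def
        proof (intro conjI)
          have "a \<in> {a, b}" "b \<in> {a, b}" by simp_all
          then have "a \<in> {f 0, f t1}" "b \<in> {f 0, f t1}" unfolding abf by simp_all
          then show "a \<in> verts ends D1s" "b \<in> verts ends D1s" using fD1[of 0] fD1[of t1] t1 by auto
          show "verts ends Xn \<inter> verts ends Yn \<subseteq> {a, b}" using VV abf by simp
        qed (fact P D1m ab D1eq disj)+
        then have "good CC (set pes) Xn Yn" using IH2 cardlt by blast
        then show ?thesis using trf by blast
      next
        case False
        have "V q \<in> {V q, V (q + int k)}" by simp
        then have "V q \<in> {pvs ! i, pvs ! j}" unfolding ep .
        then have vqij: "V q = pvs ! i \<or> V q = pvs ! j" by simp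
        obtain l where l: "l = i \<or> l = j" "pvs ! l = f 0"
        proof (cases "V q = pvs ! i")
          case True then show ?thesis using that[of i] f0 by simp
        next
          case False then have "V q = pvs ! j" using vqij by simp
          then show ?thesis using that[of j] f0 by simp
        qed
        have lL: "l \<le> L" using l ij by (auto simp: L_def)
        have l0: "l \<noteq> 0"
        proof
          assume "l = 0" then have "f 0 = a" using l(2) p0 by simp
          then show False using False by simp
        qed
        have lL': "l \<noteq> L"
        proof
          assume "l = L" then have "f 0 = b" using l(2) pL by simp
          then show False using False by simp
        qed
        have s0: "f 0 \<in> verts ends D1s" using fD1[of 0] by simp
        have s1: "f t1 \<in> verts ends D1s" using fD1[of t1] t1 by simp
        consider "f t1 = a" | "f t1 = b" using c1 by auto
        then show ?thesis
        proof cases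
          case 1
          have pp: "is_path dir ends C1 (pvs ! 0) (pvs ! l) (take (l - 0 + 1) (drop 0 pvs)) (take (l - 0) (drop 0 pes))"
            by (rule path_seg[OF P]) (use lL in \<open>auto simp: L_def\<close>)
          have "inst dir ends C1 CC a (f 0) (take (l - 0 + 1) (drop 0 pvs)) (take (l - 0) (drop 0 pes)) D1s Xn Yn"
            unfolding inst_def
          proof (intro conjI)
            show "is_path dir ends C1 a (f 0) (take (l - 0 + 1) (drop 0 pvs)) (take (l - 0) (drop 0 pes))"
              using pp p0 l(2) by simp
            show "a \<noteq> f 0" using False by auto
            show "a \<in> verts ends D1s" using s1 1 by simp
            show "verts ends Xn \<inter> verts ends Yn \<subseteq> {a, f 0}" using VV 1 by auto
          qed (fact D1m s0 D1eq disj)+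
          moreover have "length (take (l - 0) (drop 0 pes)) < length pes" using lL lL' by (simp add: L_def)
          ultimately have "good CC (set (take (l - 0) (drop 0 pes))) Xn Yn" using IH1 by blast
          moreover have "set (take (l - 0) (drop 0 pes)) \<subseteq> set pes" by (simp add: set_take_subset)
          ultimately show ?thesis using trf by blast
        next
          case 2
          have pp: "is_path dir ends C1 (pvs ! l) (pvs ! L) (take (L - l + 1) (drop l pvs)) (take (L - l) (drop l pes))"
            by (rule path_seg[OF P]) (use lL in \<open>auto simp: L_def\<close>)
          have "inst dir ends C1 CC (f 0) b (take (L - l + 1) (drop l pvs)) (take (L - l) (drop l pes)) D1s Xn Yn"
            unfolding inst_def
          proof (intro conjI)
            show "is_path dir ends C1 (f 0) b (take (L - l + 1) (drop l pvs)) (take (L - l) (drop l pes))"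
              using pp pL l(2) by simp
            show "f 0 \<noteq> b" using False by auto
            show "b \<in> verts ends D1s" using s1 2 by simp
            show "verts ends Xn \<inter> verts ends Yn \<subseteq> {f 0, b}" using VV 2 by auto
          qed (fact D1m s0 D1eq disj)+
          moreover have "length (take (L - l) (drop l pes)) < length pes" using lL l0 by (simp add: L_def)
          ultimately have "good CC (set (take (L - l) (drop l pes))) Xn Yn" using IH1 by blast
          moreover have "set (take (L - l) (drop l pes)) \<subseteq> set pes"
            using set_take_subset set_drop_subset by (metis order_trans)
          ultimately show ?thesis using trf by blast
        qed
      qed
    next
      case False
      then have ex2: "\<exists>m. t1 \<le> m \<and> m < k \<and> A m" by blast
      define t2 where "t2 = (LEAST m. t1 \<le> m \<and> m < k \<and> A m)"
      have t2': "t1 \<le> t2 \<and> t2 < k \<and> A t2" unfolding t2_def by (rule LeastI_ex[OF ex2])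
      then have t2: "t1 \<le> t2" "t2 < k" "A t2" by simp_all
      have t2b: "\<And>m. t1 \<le> m \<Longrightarrow> m < t2 \<Longrightarrow> \<not> A m"
      proof -
        fix m assume m: "t1 \<le> m" "m < t2"
        then have "\<not> (t1 \<le> m \<and> m < k \<and> A m)" unfolding t2_def by (intro not_less_Least) simp
        then show "\<not> A m" using m t2 by simp
      qed
      have t12: "t1 < t2"
      proof (rule ccontr)
        assume "\<not> t1 < t2" then have "t1 = t2" using t2 by simp
        then show False using t1 t2 by simp
      qed
      have "\<not> A (t2 - 1)" using t2b t12 by simp
      then have c2: "f t2 \<in> {a, b}" using trans[of t2] t12 t2 by simp
      have after: "\<forall>m. t2 \<le> m \<and> m < k \<longrightarrow> A m"
      proof (rule ccontr)
        assume "\<not> (\<forall>m. t2 \<le> m \<and> m < k \<longrightarrow> A m)"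
        then have ex3: "\<exists>m. t2 \<le> m \<and> m < k \<and> \<not> A m" by blast
        define t3 where "t3 = (LEAST m. t2 \<le> m \<and> m < k \<and> \<not> A m)"
        have t3': "t2 \<le> t3 \<and> t3 < k \<and> \<not> A t3" unfolding t3_def by (rule LeastI_ex[OF ex3])
        then have t3: "t2 \<le> t3" "t3 < k" "\<not> A t3" by simp_all
        have t3b: "\<And>m. t2 \<le> m \<Longrightarrow> m < t3 \<Longrightarrow> A m"
        proof -
          fix m assume m: "t2 \<le> m" "m < t3"
          then have "\<not> (t2 \<le> m \<and> m < k \<and> \<not> A m)" unfolding t3_def by (intro not_less_Least) simp
          then show "A m" using m t3 by simp
        qed
        have t23: "t2 < t3"
        proof (rule ccontr)
          assume "\<not> t2 < t3" then have "t2 = t3" using t3 by simp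
          then show False using t2 t3 by simp
        qed
        have "A (t3 - 1)" using t3b t23 by simp
        then have c3: "f t3 \<in> {a, b}" using trans[of t3] t23 t3 by simp
        have "f t1 \<noteq> f t2" using fne[of t1 t2] t12 t2 by simp
        moreover have "f t1 \<noteq> f t3" using fne[of t1 t3] t12 t23 t3 by simp
        moreover have "f t2 \<noteq> f t3" using fne[of t2 t3] t23 t3 by simp
        ultimately show False using c1 c2 c3 by auto
      qed
      define Xn where "Xn = arc Ed (q + int t1) (t2 - t1)"
      define Yn where "Yn = arc Ed q t1 \<union> arc Ed (q + int t2) (k - t2) \<union> Qs"
      have Wpart: "Xn \<subseteq> W"
      proof
        fix x assume "x \<in> Xn"
        then obtain m where m: "m < t2 - t1" "x = Ed (q + int t1 + int m)" by (auto simp: arc_def Xn_def)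
        then have "\<not> A (t1 + m)" using t2b by simp
        then have "Ed (q + int (t1 + m)) \<in> W" by (rule sides)
        moreover have "q + int (t1 + m) = q + int t1 + int m" by simp
        ultimately show "x \<in> W" using m(2) by (simp add: add.assoc)
      qed
      have Zpart2: "arc Ed (q + int t2) (k - t2) \<subseteq> Z"
      proof
        fix x assume "x \<in> arc Ed (q + int t2) (k - t2)"
        then obtain m where m: "m < k - t2" "x = Ed (q + int t2 + int m)" by (auto simp: arc_def)
        then have "A (t2 + m)" using after by simp
        then show "x \<in> Z" using m unfolding A_def by (simp add: algebra_simps)
      qed
      have e12: "q + int t1 + int (t2 - t1) = q + int t2" using t12 by simp
      have "arc Ed q k = arc Ed q t1 \<union> arc Ed (q + int t1) (k - t1)"
        using arc_split[of Ed q t1 "k - t1"] t1 by simp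
      moreover have "arc Ed (q + int t1) (k - t1) = arc Ed (q + int t1) (t2 - t1) \<union> arc Ed (q + int t2) (k - t2)"
        using arc_split[of Ed "q + int t1" "t2 - t1" "k - t2"] t2 t12 unfolding e12 by simp
      ultimately have D1eq: "D1s = Xn \<union> Yn" unfolding D1s_def Xn_def Yn_def by blast
      have disj: "Xn \<inter> Yn = {}"
        using Zpart Zpart2 Wpart ZW QC arcC2[of "q + int t1" "t2 - t1"] unfolding Xn_def Yn_def by blast
      have vX: "verts ends Xn = f ` {t1..t2}" using vs_arc[of "t2 - t1" t1] t12 by (simp add: Xn_def)
      have vA: "verts ends (arc Ed q t1) = f ` {0..t1}" using vs_arc0[OF t10] by simp
      have vB: "verts ends (arc Ed (q + int t2) (k - t2)) = f ` {t2..k}" using vs_arc[of "k - t2" t2] t2 by simp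
      have i1: "f ` {0..t1} \<inter> f ` {t1..t2} \<subseteq> {f t1}" by (rule img_int[OF finj]) (use t12 t2 in auto)
      have i3: "f ` {t1..t2} \<inter> f ` {t2..k} \<subseteq> {f t2}" by (rule img_int[OF finj]) (use t12 t2 in auto)
      have i2: "verts ends Qs \<inter> f ` {t1..t2} = {}"
      proof (rule ccontr)
        assume "verts ends Qs \<inter> f ` {t1..t2} \<noteq> {}"
        then obtain x where x: "x \<in> verts ends Qs" "x \<in> f ` {t1..t2}" by blast
        then obtain y where y: "t1 \<le> y" "y \<le> t2" "x = f y" by auto
        have "x \<in> verts ends (arc Ed (q + int t1) (t2 - t1))" using x(2) vX by (simp add: Xn_def)
        then have xx: "x \<in> {f 0, f k}" using QCv[of "q + int t1" "t2 - t1"] x(1) by blast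
        have yk: "y \<le> k" using y t2 by simp
        have "y = 0 \<or> y = k"
        proof (cases "x = f 0")
          case True then show ?thesis using finj[of y 0] yk y by simp
        next
          case False then have "x = f k" using xx by simp
          then show ?thesis using finj[of y k] yk y by simp
        qed
        then show False using y t10 t2 by auto
      qed
      have VV: "verts ends Xn \<inter> verts ends Yn \<subseteq> {f t1, f t2}"
      proof
        fix x assume x: "x \<in> verts ends Xn \<inter> verts ends Yn"
        then have x1: "x \<in> f ` {t1..t2}" using vX by simp
        have "x \<in> verts ends (arc Ed q t1) \<or> x \<in> verts ends (arc Ed (q + int t2) (k - t2)) \<or> x \<in> verts ends Qs"
          using x unfolding Yn_def verts_Un by simp
        then show "x \<in> {f t1, f t2}"
        proof (elim disjE)
          assume "x \<in> verts ends (arc Ed q t1)"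
          then have "x \<in> f ` {0..t1}" using vA by simp
          then show ?thesis using i1 x1 by blast
        next
          assume "x \<in> verts ends (arc Ed (q + int t2) (k - t2))"
          then have "x \<in> f ` {t2..k}" using vB by simp
          then show ?thesis using i3 x1 by blast
        next
          assume "x \<in> verts ends Qs"
          then show ?thesis using i2 x1 by blast
        qed
      qed
      have ne: "f t1 \<noteq> f t2" using fne[of t1 t2] t12 t2 by simp
      have abf: "{a, b} = {f t1, f t2}" using c1 c2 ne ab by auto
      have D1m: "D1s \<in> CC" using D1 by (simp add: D1s_def)
      have "inst dir ends C1 CC a b pvs pes D1s Xn Yn"
        unfolding inst_def
      proof (intro conjI)
        have "a \<in> {a, b}" "b \<in> {a, b}" by simp_all
        then have "a \<in> {f t1, f t2}" "b \<in> {f t1, f t2}" unfolding abf by simp_all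
        then show "a \<in> verts ends D1s" "b \<in> verts ends D1s" using fD1[of t1] fD1[of t2] t1 t2 by auto
        show "verts ends Xn \<inter> verts ends Yn \<subseteq> {a, b}" using VV abf by simp
      qed (fact P D1m ab D1eq disj)+
      then have "good CC (set pes) Xn Yn" using IH2 cardlt by blast
      then have "good CC (set pes) W Z"
        by (rule good_tr) (use Zpart Zpart2 Wpart QP in \<open>auto simp: Yn_def\<close>)
      then show ?thesis by (rule good_sym)
    qed
  qed
qed




lemma step:
  assumes cycles: "\<forall>C\<in>CC. cycle_edges dir ends E C" and unc: "uncrossable dir ends CC" and C1: "C1 \<in> CC"
    and IH1: "\<And>a' b' pvs' pes' C' X' Y'. length pes' < length pes \<Longrightarrow>
        inst dir ends C1 CC a' b' pvs' pes' C' X' Y' \<Longrightarrow> good CC (set pes') X' Y'"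
    and IH2: "\<And>C' X' Y'. card (C' - set pes) < card (C2 - set pes) \<Longrightarrow>
        inst dir ends C1 CC a b pvs pes C' X' Y' \<Longrightarrow> good CC (set pes) X' Y'"
    and I: "inst dir ends C1 CC a b pvs pes C2 X Y"
  shows "good CC (set pes) X Y"
proof -
  have II: "is_path dir ends C1 a b pvs pes \<and> C2 \<in> CC \<and> a \<noteq> b \<and>
     a \<in> verts ends C2 \<and> b \<in> verts ends C2 \<and> C2 = X \<union> Y \<and> X \<inter> Y = {} \<and>
     verts ends X \<inter> verts ends Y \<subseteq> {a, b}" using I unfolding inst_def .
  then have P: "is_path dir ends C1 a b pvs pes" and C2m: "C2 \<in> CC" and ab: "a \<noteq> b"
    and aC: "a \<in> verts ends C2" and bC: "b \<in> verts ends C2" and C2XY: "C2 = X \<union> Y"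
    and XY: "X \<inter> Y = {}" and vXY: "verts ends X \<inter> verts ends Y \<subseteq> {a, b}" by blast+
  define L where "L = length pes"
  have Wk: "uwalk ends pvs pes" and D: "distinct pvs" and p0: "pvs ! 0 = a" and pL: "pvs ! L = b"
    and lv: "length pvs = Suc L"
    using path_facts[OF P] by (simp_all add: L_def)
  have "cycle_edges dir ends E C2" using cycles C2m by blast
  then obtain n V Ed where c: "cyc ends n V Ed" and C2r: "C2 = range Ed" and fin: "finite C2"
    using cycle_edges_cyc by blast
  have ne: "pes \<noteq> []" by (rule path_ne[OF P ab])
  show ?thesis
  proof (cases "set pes \<subseteq> C2")
    case True
    have sr: "set pes \<subseteq> range Ed" using True C2r by simp
    obtain q k where qk: "0 < k" "k < n" "set pes = arc Ed q k"
      and en: "(pvs ! 0 = V q \<and> pvs ! length pes = V (q + int k)) \<or> (pvs ! 0 = V (q + int k) \<and> pvs ! length pes = V q)"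
      using cyc_path[OF c Wk D sr ne] by blast
    have abV: "{a, b} = {V q, V (q + int k)}" using en p0 pL unfolding L_def by auto
    have compl: "C2 - set pes = arc Ed (q + int k) (n - k)" using arc_compl[OF c, of k q] qk C2r by simp
    have intr: "\<forall>m. 0 < m \<and> m < n - k \<longrightarrow> V (q + int k + int m) \<notin> {a, b}"
    proof (intro allI impI)
      fix m assume m: "0 < m \<and> m < n - k"
      have h1: "V (q + int k + int m) \<noteq> V q"
      proof
        assume "V (q + int k + int m) = V q"
        then have "V (q + int (k + m)) = V (q + int 0)" by (simp add: add.assoc)
        then have "k + m = 0" by (rule cyc_Vinj[OF c]) (use m qk in auto)
        then show False using m by simp
      qed
      have h2: "V (q + int k + int m) \<noteq> V (q + int k)"
      proof
        assume "V (q + int k + int m) = V (q + int k)"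
        then have "V (q + int (k + m)) = V (q + int k)" by (simp add: add.assoc)
        then have "k + m = k" by (rule cyc_Vinj[OF c]) (use m qk in auto)
        then show False using m by simp
      qed
      show "V (q + int k + int m) \<notin> {a, b}" unfolding abV using h1 h2 by simp
    qed
    have sub: "arc Ed (q + int k) (n - k) \<subseteq> X \<union> Y" using compl C2XY by blast
    have "arc Ed (q + int k) (n - k) \<subseteq> X \<or> arc Ed (q + int k) (n - k) \<subseteq> Y"
      by (rule arc_trans[OF c sub XY vXY intr])
    then have "C2 \<subseteq> set pes \<union> X \<or> C2 \<subseteq> set pes \<union> Y" using compl by blast
    then show ?thesis using C2m unfolding good_def by blast
  next
    case False
    obtain i j where ij: "i < j" "j \<le> length pes" and xi: "pvs ! i \<in> verts ends C2"
      and yj: "pvs ! j \<in> verts ends C2" and int: "\<forall>m. i < m \<and> m < j \<longrightarrow> pvs ! m \<notin> verts ends C2"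
      and ed: "\<forall>m. i \<le> m \<and> m < j \<longrightarrow> pes ! m \<notin> C2"
      using chord[OF P aC bC False] by blast
    define x where "x = pvs ! i"
    define y where "y = pvs ! j"
    define vsQ where "vsQ = take (j - i + 1) (drop i pvs)"
    define esQ where "esQ = take (j - i) (drop i pes)"
    have Qp: "is_path dir ends C1 x y vsQ esQ" unfolding x_def y_def vsQ_def esQ_def
      by (rule path_seg[OF P]) (use ij in auto)
    have Qs: "set esQ = (\<lambda>m. pes ! m) ` {i..<j}" unfolding esQ_def by (rule seg_set) (use ij in auto)
    have Qv: "set vsQ = (\<lambda>m. pvs ! m) ` {i..j}" unfolding vsQ_def by (rule segv_set) (use ij lv in \<open>auto simp: L_def\<close>)
    have "i < length pvs" "j < length pvs" using ij lv by (auto simp: L_def)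
    then have xy: "x \<noteq> y" using nth_eq_iff_index_eq[OF D, of i j] ij by (simp add: x_def y_def)
    have vsC: "set vsQ \<inter> verts ends C2 = {x, y}"
    proof
      show "set vsQ \<inter> verts ends C2 \<subseteq> {x, y}"
      proof
        fix z assume z: "z \<in> set vsQ \<inter> verts ends C2"
        then obtain m where m: "i \<le> m" "m \<le> j" "z = pvs ! m" using Qv by auto
        then have "pvs ! m \<in> verts ends C2" using z by simp
        then have "\<not> (i < m \<and> m < j)" using int by blast
        then have "m = i \<or> m = j" using m by linarith
        then show "z \<in> {x, y}" using m by (auto simp: x_def y_def)
      qed
      show "{x, y} \<subseteq> set vsQ \<inter> verts ends C2" using Qv xi yj ij by (auto simp: x_def y_def)
    qed
    have esC: "set esQ \<inter> C2 = {}" using Qs ed by auto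
    have U0: "\<forall>C1\<in>CC. \<forall>C2\<in>CC. \<forall>x y vs es.
       is_path dir ends C2 x y vs es \<and> x \<noteq> y \<and>
       set vs \<inter> verts ends C1 = {x, y} \<and> set es \<inter> C1 = {} \<longrightarrow>
       (\<exists>P1. (path_in dir ends C1 x y P1 \<or> path_in dir ends C1 y x P1) \<and>
             (\<exists>D\<in>CC. mset_set D = mset_set P1 + mset_set (set es)) \<and>
             (\<exists>D\<in>CC. mset_set D \<subseteq># mset_set (C1 - P1) + mset_set (C2 - set es)))"
      using unc by (simp only: uncrossable_def)
    have U1: "\<forall>x y vs es.
       is_path dir ends C1 x y vs es \<and> x \<noteq> y \<and>
       set vs \<inter> verts ends C2 = {x, y} \<and> set es \<inter> C2 = {} \<longrightarrow>
       (\<exists>P1. (path_in dir ends C2 x y P1 \<or> path_in dir ends C2 y x P1) \<and>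
             (\<exists>D\<in>CC. mset_set D = mset_set P1 + mset_set (set es)) \<and>
             (\<exists>D\<in>CC. mset_set D \<subseteq># mset_set (C2 - P1) + mset_set (C1 - set es)))"
      using bspec[OF bspec[OF U0 C2m] C1] .
    have "\<exists>P1. (path_in dir ends C2 x y P1 \<or> path_in dir ends C2 y x P1) \<and>
             (\<exists>D\<in>CC. mset_set D = mset_set P1 + mset_set (set esQ)) \<and>
             (\<exists>D\<in>CC. mset_set D \<subseteq># mset_set (C2 - P1) + mset_set (C1 - set esQ))"
      using U1[rule_format, of x y vsQ esQ] Qp xy vsC esC by blast
    then obtain Pc D1 where Pc: "path_in dir ends C2 x y Pc \<or> path_in dir ends C2 y x Pc"
      and D1: "D1 \<in> CC" "mset_set D1 = mset_set Pc + mset_set (set esQ)" by blast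
    have "\<exists>s t vs' es'. is_path dir ends C2 s t vs' es' \<and> ((s = x \<and> t = y) \<or> (s = y \<and> t = x)) \<and> Pc = set es'"
      using Pc unfolding path_in_def by blast
    then obtain s t vs' es' where pth: "is_path dir ends C2 s t vs' es'"
      and st: "(s = x \<and> t = y) \<or> (s = y \<and> t = x)" and Pe: "Pc = set es'" by blast
    have "s \<noteq> t" using st xy by auto
    then have ne': "es' \<noteq> []" by (rule path_ne[OF pth])
    have sr': "set es' \<subseteq> range Ed" using path_facts(3)[OF pth] C2r by simp
    obtain q k where qk: "0 < k" "k < n" "set es' = arc Ed q k"
      and en: "(vs' ! 0 = V q \<and> vs' ! length es' = V (q + int k)) \<or> (vs' ! 0 = V (q + int k) \<and> vs' ! length es' = V q)"
      using cyc_path[OF c path_facts(1)[OF pth] path_facts(2)[OF pth] sr' ne'] by blast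
    have s0: "vs' ! 0 = s" "vs' ! length es' = t" using path_facts(4,5)[OF pth] by simp_all
    have ep: "{V q, V (q + int k)} = {pvs ! i, pvs ! j}"
      using en st s0 unfolding x_def[symmetric] y_def[symmetric] by auto
    define Qs where "Qs = (\<lambda>m. pes ! m) ` {i..<j}"
    have "cycle_edges dir ends E D1" using cycles D1(1) by blast
    then have finD1: "finite D1" using cycle_edges_cyc by blast
    have "set_mset (mset_set D1) = set_mset (mset_set Pc + mset_set (set esQ))" using D1(2) by simp
    then have "D1 = Pc \<union> set esQ" using finD1 Pe by simp
    then have D1eq: "D1 = arc Ed q k \<union> Qs" using Pe qk(3) Qs by (simp add: Qs_def)
    have QC: "Qs \<inter> C2 = {}" using esC Qs by (simp add: Qs_def)
    have Qvv: "verts ends Qs \<inter> verts ends C2 \<subseteq> {V q, V (q + int k)}"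
    proof
      fix z assume z: "z \<in> verts ends Qs \<inter> verts ends C2"
      then have "z \<in> (\<lambda>m. pvs ! m) ` {i..j}" using verts_seg[OF Wk ij(2), of i] by (auto simp: Qs_def)
      then have "z \<in> set vsQ \<inter> verts ends C2" using z Qv by auto
      then show "z \<in> {V q, V (q + int k)}" using vsC ep by (simp add: x_def y_def)
    qed
    have D1': "arc Ed q k \<union> Qs \<in> CC" using D1 D1eq by simp
    show ?thesis
    proof (cases "Ed q \<in> X")
      case True
      show ?thesis by (rule core[OF IH1 IH2 I c C2r fin qk(1,2) ij ep Qs_def QC Qvv D1' True])
    next
      case False
      then have EY: "Ed q \<in> Y" using C2XY C2r by auto
      have "good CC (set pes) Y X"
        by (rule core[OF IH1 IH2 inst_sym[OF I] c C2r fin qk(1,2) ij ep Qs_def QC Qvv D1' EY])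
      then show ?thesis by (rule good_sym)
    qed
  qed
qed

lemma claim_inner:
  assumes cycles: "\<forall>C\<in>CC. cycle_edges dir ends E C" and unc: "uncrossable dir ends CC" and C1: "C1 \<in> CC"
    and IH1: "\<And>a' b' pvs' pes' C' X' Y'. length pes' < length pes \<Longrightarrow>
        inst dir ends C1 CC a' b' pvs' pes' C' X' Y' \<Longrightarrow> good CC (set pes') X' Y'"
  shows "card (C2 - set pes) = M \<Longrightarrow> inst dir ends C1 CC a b pvs pes C2 X Y \<Longrightarrow> good CC (set pes) X Y"
proof (induction M arbitrary: C2 X Y rule: less_induct)
  case (less M)
  show ?case
  proof (rule step[OF cycles unc C1 IH1 _ less.prems(2)])
    fix C' X' Y' assume h: "card (C' - set pes) < card (C2 - set pes)" "inst dir ends C1 CC a b pvs pes C' X' Y'"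
    show "good CC (set pes) X' Y'" using less.IH[OF _ refl h(2)] h(1) less.prems(1) by simp
  qed
qed

lemma claim:
  assumes cycles: "\<forall>C\<in>CC. cycle_edges dir ends E C" and unc: "uncrossable dir ends CC" and C1: "C1 \<in> CC"
  shows "length pes = N \<Longrightarrow> inst dir ends C1 CC a b pvs pes C2 X Y \<Longrightarrow> good CC (set pes) X Y"
proof (induction N arbitrary: a b pvs pes C2 X Y rule: less_induct)
  case (less N)
  show ?case
  proof (rule claim_inner[OF cycles unc C1 _ refl less.prems(2)])
    fix a' b' pvs' pes' C' X' Y' assume h: "length pes' < length pes" "inst dir ends C1 CC a' b' pvs' pes' C' X' Y'"
    show "good CC (set pes') X' Y'" using less.IH[OF _ refl h(2)] h(1) less.prems(1) by simp
  qed
qed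

lemma mset_sub:
  assumes "finite A" "finite B" "D \<subseteq> A \<union> B"
  shows "mset_set D \<subseteq># mset_set A + mset_set B"
proof -
  have fD: "finite D" using assms by (meson finite_Un finite_subset)
  show ?thesis unfolding subseteq_mset_def
  proof
    fix x
    show "count (mset_set D) x \<le> count (mset_set A + mset_set B) x"
      using assms fD by (auto simp: count_mset_set')
  qed
qed

theorem lemma4p3:
  fixes dir :: bool and ends :: "'e \<Rightarrow> 'v \<times> 'v" and E :: "'e set" and \<C> :: "'e set set"
  assumes cycles: "\<forall>C\<in>\<C>. cycle_edges dir ends E C"
    and unc: "uncrossable dir ends \<C>"
    and C1: "C1 \<in> \<C>" and C2: "C2 \<in> \<C>"
    and P1: "path_in dir ends C1 v w P1"
    and P2: "path_in dir ends C2 v w P2"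
  shows "\<exists>D\<in>\<C>. mset_set D \<subseteq># mset_set P1 + mset_set P2 \<or>
                 mset_set D \<subseteq># mset_set P1 + mset_set (C2 - P2)"
proof (cases "v = w")
  case True
  obtain vs es where p: "is_path dir ends C2 v w vs es" "P2 = set es" using P2 unfolding path_in_def by blast
  have "es = []" using path_triv[of dir ends C2 v vs es] p(1) True by simp
  then have "P2 = {}" using p(2) by simp
  then show ?thesis using C2 by (intro bexI[of _ C2]) simp_all
next
  case False
  obtain pvs pes where p1: "is_path dir ends C1 v w pvs pes" "P1 = set pes" using P1 unfolding path_in_def by blast
  obtain vs2 es2 where p2: "is_path dir ends C2 v w vs2 es2" "P2 = set es2" using P2 unfolding path_in_def by blast
  have "cycle_edges dir ends E C2" using cycles C2 by blast
  then obtain n V Ed where c: "cyc ends n V Ed" and C2r: "C2 = range Ed" and fin: "finite C2"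
    using cycle_edges_cyc by blast
  have ne2: "es2 \<noteq> []" by (rule path_ne[OF p2(1) False])
  have sr: "set es2 \<subseteq> range Ed" using path_facts(3)[OF p2(1)] C2r by simp
  obtain q k where qk: "0 < k" "k < n" "set es2 = arc Ed q k"
    and en: "(vs2 ! 0 = V q \<and> vs2 ! length es2 = V (q + int k)) \<or> (vs2 ! 0 = V (q + int k) \<and> vs2 ! length es2 = V q)"
    using cyc_path[OF c path_facts(1)[OF p2(1)] path_facts(2)[OF p2(1)] sr ne2] by blast
  have e2: "vs2 ! 0 = v" "vs2 ! length es2 = w" using path_facts(4,5)[OF p2(1)] by simp_all
  have vw: "{v, w} = {V q, V (q + int k)}" using en e2 by auto
  define f where "f = (\<lambda>m::nat. V (q + int m))"
  have P2C: "P2 \<subseteq> C2" using path_facts(3)[OF p2(1)] p2(2) by simp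
  have compl: "C2 - P2 = arc Ed (q + int k) (n - k)" using arc_compl[OF c, of k q] qk C2r p2(2) by simp
  have vP: "verts ends P2 = f ` {0..k}" using verts_arc2[OF c qk(1), of q 0] p2(2) qk(3) by (simp add: f_def)
  have vY: "verts ends (C2 - P2) = f ` {k..n}" using verts_arc2[OF c, of "n-k" q k] compl qk by (simp add: f_def)
  have Vq: "V q \<in> {v, w}" "V (q + int k) \<in> {v, w}" unfolding vw by simp_all
  have fn: "f n = V q" using c by (simp add: f_def cyc_def)
  have VV: "verts ends P2 \<inter> verts ends (C2 - P2) \<subseteq> {v, w}"
  proof
    fix z assume z: "z \<in> verts ends P2 \<inter> verts ends (C2 - P2)"
    then obtain a' b' where ab': "a' \<le> k" "k \<le> b'" "b' \<le> n" "z = f a'" "z = f b'" using vP vY by auto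
    show "z \<in> {v, w}"
    proof (cases "b' = n")
      case True
      then show ?thesis using ab' fn Vq by simp
    next
      case False
      have "f a' = f b'" using ab' by simp
      then have "a' = b'" using cyc_Vinj[OF c, of q a' b'] ab' qk False by (simp add: f_def)
      then have "a' = k" using ab' by simp
      then show ?thesis using ab' Vq by (simp add: f_def)
    qed
  qed
  have vin: "v \<in> {V q, V (q + int k)}" "w \<in> {V q, V (q + int k)}" unfolding vw[symmetric] by simp_all
  have fk: "f 0 \<in> verts ends P2" "f k \<in> verts ends P2" unfolding vP by auto
  then have vC: "v \<in> verts ends C2" "w \<in> verts ends C2" using vin verts_mono[OF P2C, of ends] by (auto simp: f_def)
  have I: "inst dir ends C1 \<C> v w pvs pes C2 P2 (C2 - P2)"
    unfolding inst_def
  proof (intro conjI)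
    show "C2 = P2 \<union> (C2 - P2)" using P2C by blast
  qed (use p1(1) C2 False vC VV in auto)
  have "good \<C> (set pes) P2 (C2 - P2)" by (rule claim[OF cycles unc C1 refl I])
  then obtain D where D: "D \<in> \<C>" "D \<subseteq> P1 \<union> P2 \<or> D \<subseteq> P1 \<union> (C2 - P2)" using p1(2) unfolding good_def by blast
  have fP1: "finite P1" using p1(2) by simp
  have fP2: "finite P2" using p2(2) by simp
  have fY: "finite (C2 - P2)" using fin by simp
  from D(2) have "mset_set D \<subseteq># mset_set P1 + mset_set P2 \<or> mset_set D \<subseteq># mset_set P1 + mset_set (C2 - P2)"
    using mset_sub[OF fP1 fP2] mset_sub[OF fP1 fY] by blast
  then show ?thesis using D(1) by blast
qed


end
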